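(* Let $M$ be a finite-dimensional graded pointed Majid algebra over $\mathbbm{k}$, generated by a finite abelian group $G$ (its group of group-like elements, so $M(0)=\mathbbm{k}G$) and a set of skew-primitive elements, and let $\Phi$ be the normalized 3-cocycle on $G$ obtained by restricting the associator of $M$ to $G$. Let $\pi:M\to \mathbbm{k}G$ be the projection onto $M(0)$. For $g\in G$ put $$R_g=\{m\in M \mid (\pi\otimes \mathrm{id})\Delta(m)=g\otimes m,\ (\mathrm{id}\otimes\pi)\Delta(m)=m\otimes 1\},$$ so that $R:=\{m\in M\mid (\mathrm{id}\otimes \pi)\Delta(m)=m\otimes 1\}=\bigoplus_{g\in G}R_g$. For $f\in G$ and $X\in R_g$ define $$f\triangleright X=\frac{\Phi(fg,f^{-1},f)}{\Phi(f,f^{-1},f)}\,(f\cdot X)\cdot f^{-1},$$ where $\cdot$ is the multiplication of $M$. Then $f\triangleright X\in R_g$, and for all $e,f\in G$, $X\in R_g$, $$e\triangleright(f\triangleright X)=\widetilde{\Phi}_g(e,f)\,(ef)\triangleright X,\qquad \widetilde{\Phi}_g(e,f)=\frac{\Phi(g,e,f)\Phi(e,f,g)}{\Phi(e,g,f)}.$$ Consequently $R$, with the $G$-grading $R=\bigoplus_g R_g$ and this action, is an object of the category ${}^{\mathbbm{k}G}_{\mathbbm{k}G}\mathcal{YD}^{\Phi}$.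
   Context: $\mathbbm{k}$ is an algebraically closed field of characteristic $0$. A Majid algebra (coquasi-Hopf algebra) is a coassociative counital coalgebra $(M,\Delta,\varepsilon)$ with a unital, not necessarily associative, multiplication which is a coalgebra map, a convolution-invertible linear form $\Phi:M^{\otimes 3}\to\mathbbm{k}$ (the associator) satisfying $a_1(b_1c_1)\Phi(a_2,b_2,c_2)=\Phi(a_1,b_1,c_1)(a_2b_2)c_2$ together with the usual 3-cocycle and normalization conditions, and a quasi-antipode $(S,\alpha,\beta)$ with $S(a_1)\alpha(a_2)a_3=\alpha(a)1$, $a_1\beta(a_2)S(a_3)=\beta(a)1$, $\Phi(a_1,S(a_3),a_5)\beta(a_2)\alpha(a_4)=\varepsilon(a)=\Phi^{-1}(S(a_1),a_3,S(a_5))\alpha(a_2)\beta(a_4)$ (Sweedler notation). $M$ is pointed if its simple comodules are one-dimensional; then its coradical is $\mathbbm{k}G$ with $G$ the group of group-likes, and $\Phi$ restricts to a normalized 3-cocycle on $G$. $M$ is graded if $M=\bigoplus_{n\ge0}M(n)$ is the coradical grading (with $M(0)=\mathbbm{k}G$, $\bigoplus_{i\le n}M(i)$ the coradical filtration) and the multiplication, $S$, $\Phi,\alpha,\beta$ respect it (in particular $\Phi,\alpha,\beta$ vanish when an argument lies in $\bigoplus_{i\ge1}M(i)$). "Generated by $G$ and skew-primitive elements" means generated as an algebra by $G$ and elements $X$ with $\Delta(X)=X\otimes h+g\otimes X$, $g,h\in G$. The category ${}^{\mathbbm{k}G}_{\mathbbm{k}G}\mathcal{YD}^{\Phi}$ has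 as objects $G$-graded vector spaces $V=\bigoplus_{g\in G}V_g$ with maps $G\times V_g\to V_g$, $(e,v)\mapsto e\triangleright v$, such that $1\triangleright v=v$ and $e\triangleright(f\triangleright v)=\widetilde{\Phi}_g(e,f)(ef)\triangleright v$ for $v\in V_g$ (i.e. each $V_g$ is a projective $G$-representation with 2-cocycle $\widetilde{\Phi}_g$). *)

theory Defs
  imports "HOL-Library.Function_Algebras" "HOL-Computational_Algebra.Polynomial"
begin

text \<open>A finite-dimensional vector space M over k is modelled as the space of functions
  'b \<Rightarrow> 'k for a finite type 'b (its basis).  M \<otimes> M is modelled as ('b \<times> 'b) \<Rightarrow> 'k.\<close>

definition bv :: "'b \<Rightarrow> 'b \<Rightarrow> 'k::zero_neq_one" where
  "bv b = (\<lambda>i. if i = b then 1 else 0)"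

definition smul :: "'k::times \<Rightarrow> ('a \<Rightarrow> 'k) \<Rightarrow> ('a \<Rightarrow> 'k)" where
  "smul c v = (\<lambda>i. c * v i)"

definition tens2 :: "('b \<Rightarrow> 'k::times) \<Rightarrow> ('b \<Rightarrow> 'k) \<Rightarrow> ('b \<times> 'b \<Rightarrow> 'k)" where
  "tens2 x y = (\<lambda>(i,j). x i * y j)"

definition lspan :: "('a \<Rightarrow> 'k::field) set \<Rightarrow> ('a \<Rightarrow> 'k) set" where
  "lspan A = {v. \<exists>F c. finite F \<and> F \<subseteq> A \<and> v = (\<Sum>u\<in>F. smul (c u) u)}"

definition subspace_f :: "('a \<Rightarrow> 'k::field) set \<Rightarrow> bool" where
  "subspace_f A \<longleftrightarrow> 0 \<in> A \<and> (\<forall>x\<in>A. \<forall>y\<in>A. x + y \<in> A) \<and> (\<forall>c x. x \<in> A \<longrightarrow> smul c x \<in> A)"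

definition tens_sp :: "('b \<Rightarrow> 'k::field) set \<Rightarrow> ('b \<Rightarrow> 'k) set \<Rightarrow> ('b \<times> 'b \<Rightarrow> 'k) set" where
  "tens_sp A B = lspan {tens2 a b | a b. a \<in> A \<and> b \<in> B}"

definition linear_f :: "(('a \<Rightarrow> 'k::field) \<Rightarrow> ('c \<Rightarrow> 'k)) \<Rightarrow> bool" where
  "linear_f f \<longleftrightarrow> (\<forall>x y. f (x + y) = f x + f y) \<and> (\<forall>c x. f (smul c x) = smul c (f x))"

definition linear_fn :: "(('a \<Rightarrow> 'k::field) \<Rightarrow> 'k) \<Rightarrow> bool" where
  "linear_fn f \<longleftrightarrow> (\<forall>x y. f (x + y) = f x + f y) \<and> (\<forall>c x. f (smul c x) = c * f x)"

definition bilinear_f :: "(('a \<Rightarrow> 'k::field) \<Rightarrow> ('a \<Rightarrow> 'k) \<Rightarrow> ('a \<Rightarrow> 'k)) \<Rightarrow> bool" where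
  "bilinear_f m \<longleftrightarrow> (\<forall>x. linear_f (m x)) \<and> (\<forall>y. linear_f (\<lambda>x. m x y))"

definition trilinear_fn :: "(('a \<Rightarrow> 'k::field) \<Rightarrow> ('a \<Rightarrow> 'k) \<Rightarrow> ('a \<Rightarrow> 'k) \<Rightarrow> 'k) \<Rightarrow> bool" where
  "trilinear_fn P \<longleftrightarrow> (\<forall>y z. linear_fn (\<lambda>x. P x y z)) \<and> (\<forall>x z. linear_fn (\<lambda>y. P x y z))
      \<and> (\<forall>x y. linear_fn (\<lambda>z. P x y z))"

text \<open>(f \<otimes> h) applied to an element of M \<otimes> M, for linear f, h\<close>
definition tmap :: "(('b::finite \<Rightarrow> 'k::field) \<Rightarrow> ('b \<Rightarrow> 'k)) \<Rightarrow> (('b \<Rightarrow> 'k) \<Rightarrow> ('b \<Rightarrow> 'k))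
    \<Rightarrow> ('b \<times> 'b \<Rightarrow> 'k) \<Rightarrow> ('b \<times> 'b \<Rightarrow> 'k)" where
  "tmap f h t = (\<Sum>(i,j)\<in>UNIV. smul (t (i,j)) (tens2 (f (bv i)) (h (bv j))))"

text \<open>Del x (i,j) is the coefficient of bv i \<otimes> bv j in \<Delta>(x).
  D2 Del x i j l is the coefficient of bv i \<otimes> bv j \<otimes> bv l in x_1 \<otimes> x_2 \<otimes> x_3, etc.\<close>

definition D2 :: "(('b::finite \<Rightarrow> 'k::field) \<Rightarrow> ('b \<times> 'b \<Rightarrow> 'k)) \<Rightarrow> ('b \<Rightarrow> 'k) \<Rightarrow> 'b \<Rightarrow> 'b \<Rightarrow> 'b \<Rightarrow> 'k" where
  "D2 Del x i j l = (\<Sum>m\<in>UNIV. Del x (m,l) * Del (bv m) (i,j))"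

definition D3 :: "(('b::finite \<Rightarrow> 'k::field) \<Rightarrow> ('b \<times> 'b \<Rightarrow> 'k)) \<Rightarrow> ('b \<Rightarrow> 'k) \<Rightarrow> 'b \<Rightarrow> 'b \<Rightarrow> 'b \<Rightarrow> 'b \<Rightarrow> 'k" where
  "D3 Del x i j l n = (\<Sum>m\<in>UNIV. D2 Del x i j m * Del (bv m) (l,n))"

definition D4 :: "(('b::finite \<Rightarrow> 'k::field) \<Rightarrow> ('b \<times> 'b \<Rightarrow> 'k)) \<Rightarrow> ('b \<Rightarrow> 'k) \<Rightarrow> 'b \<Rightarrow> 'b \<Rightarrow> 'b \<Rightarrow> 'b \<Rightarrow> 'b \<Rightarrow> 'k" where
  "D4 Del x i j l n p = (\<Sum>m\<in>UNIV. D3 Del x i j l m * Del (bv m) (n,p))"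

definition coalgebra :: "(('b::finite \<Rightarrow> 'k::field) \<Rightarrow> ('b \<times> 'b \<Rightarrow> 'k)) \<Rightarrow> (('b \<Rightarrow> 'k) \<Rightarrow> 'k) \<Rightarrow> bool" where
  "coalgebra Del eps \<longleftrightarrow> linear_f Del \<and> linear_fn eps
    \<and> (\<forall>x i j l. D2 Del x i j l = (\<Sum>m\<in>UNIV. Del x (i,m) * Del (bv m) (j,l)))
    \<and> (\<forall>x j. (\<Sum>i\<in>UNIV. Del x (i,j) * eps (bv i)) = x j)
    \<and> (\<forall>x i. (\<Sum>j\<in>UNIV. Del x (i,j) * eps (bv j)) = x i)"

definition grouplikes :: "(('b::finite \<Rightarrow> 'k::field) \<Rightarrow> ('b \<times> 'b \<Rightarrow> 'k)) \<Rightarrow> (('b \<Rightarrow> 'k) \<Rightarrow> 'k) \<Rightarrow> ('b \<Rightarrow> 'k) set" where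
  "grouplikes Del eps = {g. Del g = tens2 g g \<and> eps g = 1}"

definition skewprims :: "(('b::finite \<Rightarrow> 'k::field) \<Rightarrow> ('b \<times> 'b \<Rightarrow> 'k)) \<Rightarrow> (('b \<Rightarrow> 'k) \<Rightarrow> 'k) \<Rightarrow> ('b \<Rightarrow> 'k) set" where
  "skewprims Del eps = {X. \<exists>g\<in>grouplikes Del eps. \<exists>h\<in>grouplikes Del eps. Del X = tens2 X h + tens2 g X}"

definition subcoalg :: "(('b::finite \<Rightarrow> 'k::field) \<Rightarrow> ('b \<times> 'b \<Rightarrow> 'k)) \<Rightarrow> ('b \<Rightarrow> 'k) set \<Rightarrow> bool" where
  "subcoalg Del C \<longleftrightarrow> subspace_f C \<and> (\<forall>x\<in>C. Del x \<in> tens_sp C C)"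

definition simple_subcoalg :: "(('b::finite \<Rightarrow> 'k::field) \<Rightarrow> ('b \<times> 'b \<Rightarrow> 'k)) \<Rightarrow> ('b \<Rightarrow> 'k) set \<Rightarrow> bool" where
  "simple_subcoalg Del C \<longleftrightarrow> subcoalg Del C \<and> C \<noteq> {0}
     \<and> (\<forall>D. subcoalg Del D \<and> D \<subseteq> C \<longrightarrow> D = {0} \<or> D = C)"

definition pointed :: "(('b::finite \<Rightarrow> 'k::field) \<Rightarrow> ('b \<times> 'b \<Rightarrow> 'k)) \<Rightarrow> bool" where
  "pointed Del \<longleftrightarrow> (\<forall>C. simple_subcoalg Del C \<longrightarrow> (\<exists>v. v \<noteq> 0 \<and> C = {smul c v | c. True}))"

definition corad :: "(('b::finite \<Rightarrow> 'k::field) \<Rightarrow> ('b \<times> 'b \<Rightarrow> 'k)) \<Rightarrow> ('b \<Rightarrow> 'k) set" where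
  "corad Del = lspan (\<Union>{C. simple_subcoalg Del C})"

fun coradfilt :: "(('b::finite \<Rightarrow> 'k::field) \<Rightarrow> ('b \<times> 'b \<Rightarrow> 'k)) \<Rightarrow> nat \<Rightarrow> ('b \<Rightarrow> 'k) set" where
  "coradfilt Del 0 = corad Del"
| "coradfilt Del (Suc n) = {x. Del x \<in> lspan (tens_sp UNIV (coradfilt Del n) \<union> tens_sp (corad Del) UNIV)}"

definition majid_algebra ::
  "(('b::finite \<Rightarrow> 'k::field) \<Rightarrow> ('b \<times> 'b \<Rightarrow> 'k)) \<Rightarrow> (('b \<Rightarrow> 'k) \<Rightarrow> 'k)
   \<Rightarrow> (('b \<Rightarrow> 'k) \<Rightarrow> ('b \<Rightarrow> 'k) \<Rightarrow> ('b \<Rightarrow> 'k)) \<Rightarrow> ('b \<Rightarrow> 'k)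
   \<Rightarrow> (('b \<Rightarrow> 'k) \<Rightarrow> ('b \<Rightarrow> 'k) \<Rightarrow> ('b \<Rightarrow> 'k) \<Rightarrow> 'k)
   \<Rightarrow> (('b \<Rightarrow> 'k) \<Rightarrow> ('b \<Rightarrow> 'k) \<Rightarrow> ('b \<Rightarrow> 'k) \<Rightarrow> 'k)
   \<Rightarrow> (('b \<Rightarrow> 'k) \<Rightarrow> ('b \<Rightarrow> 'k)) \<Rightarrow> (('b \<Rightarrow> 'k) \<Rightarrow> 'k) \<Rightarrow> (('b \<Rightarrow> 'k) \<Rightarrow> 'k) \<Rightarrow> bool"
where
  "majid_algebra Del eps mul one Phi Phiinv S alpha beta \<longleftrightarrow>
    coalgebra Del eps \<and> bilinear_f mul
    \<comment> \<open>unit\<close>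
    \<and> (\<forall>x. mul one x = x \<and> mul x one = x)
    \<comment> \<open>multiplication and unit are coalgebra maps\<close>
    \<and> (\<forall>x y i j. Del (mul x y) (i,j) =
         (\<Sum>(a,a')\<in>UNIV. \<Sum>(b,b')\<in>UNIV. Del x (a,a') * Del y (b,b')
              * mul (bv a) (bv b) i * mul (bv a') (bv b') j))
    \<and> (\<forall>x y. eps (mul x y) = eps x * eps y)
    \<and> Del one = tens2 one one \<and> eps one = 1
    \<comment> \<open>associator\<close>
    \<and> trilinear_fn Phi \<and> trilinear_fn Phiinv
    \<and> (\<forall>x y z.
         (\<Sum>(a,a')\<in>UNIV. \<Sum>(b,b')\<in>UNIV. \<Sum>(c,c')\<in>UNIV.
            smul (Del x (a,a') * Del y (b,b') * Del z (c,c') * Phi (bv a') (bv b') (bv c'))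
                 (mul (bv a) (mul (bv b) (bv c))))
       = (\<Sum>(a,a')\<in>UNIV. \<Sum>(b,b')\<in>UNIV. \<Sum>(c,c')\<in>UNIV.
            smul (Del x (a,a') * Del y (b,b') * Del z (c,c') * Phi (bv a) (bv b) (bv c))
                 (mul (mul (bv a') (bv b')) (bv c'))))
    \<comment> \<open>3-cocycle condition\<close>
    \<and> (\<forall>x y z w.
         (\<Sum>(a1,a2)\<in>UNIV. \<Sum>(b1,b2)\<in>UNIV. \<Sum>(c1,c2)\<in>UNIV. \<Sum>(d1,d2)\<in>UNIV.
            Del x (a1,a2) * Del y (b1,b2) * Del z (c1,c2) * Del w (d1,d2)
            * Phi (bv a1) (bv b1) (mul (bv c1) (bv d1)) * Phi (mul (bv a2) (bv b2)) (bv c2) (bv d2))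
       = (\<Sum>(a1,a2)\<in>UNIV. \<Sum>(b1,b2,b3)\<in>UNIV. \<Sum>(c1,c2,c3)\<in>UNIV. \<Sum>(d1,d2)\<in>UNIV.
            Del x (a1,a2) * D2 Del y b1 b2 b3 * D2 Del z c1 c2 c3 * Del w (d1,d2)
            * Phi (bv b1) (bv c1) (bv d1) * Phi (bv a1) (mul (bv b2) (bv c2)) (bv d2)
            * Phi (bv a2) (bv b3) (bv c3)))
    \<comment> \<open>normalization\<close>
    \<and> (\<forall>x y. Phi x one y = eps x * eps y)
    \<comment> \<open>convolution invertibility, Phiinv being the inverse\<close>
    \<and> (\<forall>x y z.
         (\<Sum>(a,a')\<in>UNIV. \<Sum>(b,b')\<in>UNIV. \<Sum>(c,c')\<in>UNIV.
            Del x (a,a') * Del y (b,b') * Del z (c,c') * Phi (bv a) (bv b) (bv c) * Phiinv (bv a') (bv b') (bv c'))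
          = eps x * eps y * eps z)
    \<and> (\<forall>x y z.
         (\<Sum>(a,a')\<in>UNIV. \<Sum>(b,b')\<in>UNIV. \<Sum>(c,c')\<in>UNIV.
            Del x (a,a') * Del y (b,b') * Del z (c,c') * Phiinv (bv a) (bv b) (bv c) * Phi (bv a') (bv b') (bv c'))
          = eps x * eps y * eps z)
    \<comment> \<open>quasi-antipode\<close>
    \<and> linear_f S \<and> linear_fn alpha \<and> linear_fn beta
    \<and> (\<forall>x. (\<Sum>(i,j,l)\<in>UNIV. smul (D2 Del x i j l * alpha (bv j)) (mul (S (bv i)) (bv l)))
             = smul (alpha x) one)
    \<and> (\<forall>x. (\<Sum>(i,j,l)\<in>UNIV. smul (D2 Del x i j l * beta (bv j)) (mul (bv i) (S (bv l))))
             = smul (beta x) one)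
    \<and> (\<forall>x. (\<Sum>(i1,i2,i3,i4,i5)\<in>UNIV. D4 Del x i1 i2 i3 i4 i5
             * Phi (bv i1) (S (bv i3)) (bv i5) * beta (bv i2) * alpha (bv i4)) = eps x)
    \<and> (\<forall>x. (\<Sum>(i1,i2,i3,i4,i5)\<in>UNIV. D4 Del x i1 i2 i3 i4 i5
             * Phiinv (S (bv i1)) (bv i3) (S (bv i5)) * alpha (bv i2) * beta (bv i4)) = eps x)"

definition grading :: "(nat \<Rightarrow> ('b::finite \<Rightarrow> 'k::field) set) \<Rightarrow> bool" where
  "grading Mg \<longleftrightarrow> (\<forall>n. subspace_f (Mg n))
     \<and> (\<forall>x. \<exists>!c. (\<forall>n. c n \<in> Mg n) \<and> finite {n. c n \<noteq> 0} \<and> x = (\<Sum>n | c n \<noteq> 0. c n))"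

definition gcomp :: "(nat \<Rightarrow> ('b::finite \<Rightarrow> 'k::field) set) \<Rightarrow> nat \<Rightarrow> ('b \<Rightarrow> 'k) \<Rightarrow> ('b \<Rightarrow> 'k)" where
  "gcomp Mg n x = (THE v. \<exists>c. (\<forall>m. c m \<in> Mg m) \<and> finite {m. c m \<noteq> 0}
                         \<and> x = (\<Sum>m | c m \<noteq> 0. c m) \<and> v = c n)"

definition graded_majid ::
  "(('b::finite \<Rightarrow> 'k::field) \<Rightarrow> ('b \<times> 'b \<Rightarrow> 'k)) \<Rightarrow> (('b \<Rightarrow> 'k) \<Rightarrow> 'k)
   \<Rightarrow> (('b \<Rightarrow> 'k) \<Rightarrow> ('b \<Rightarrow> 'k) \<Rightarrow> ('b \<Rightarrow> 'k)) \<Rightarrow> ('b \<Rightarrow> 'k)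
   \<Rightarrow> (('b \<Rightarrow> 'k) \<Rightarrow> ('b \<Rightarrow> 'k) \<Rightarrow> ('b \<Rightarrow> 'k) \<Rightarrow> 'k)
   \<Rightarrow> (('b \<Rightarrow> 'k) \<Rightarrow> ('b \<Rightarrow> 'k)) \<Rightarrow> (('b \<Rightarrow> 'k) \<Rightarrow> 'k) \<Rightarrow> (('b \<Rightarrow> 'k) \<Rightarrow> 'k)
   \<Rightarrow> (nat \<Rightarrow> ('b \<Rightarrow> 'k) set) \<Rightarrow> bool"
where
  "graded_majid Del eps mul one Phi S alpha beta Mg \<longleftrightarrow>
     grading Mg
     \<and> Mg 0 = lspan (grouplikes Del eps)
     \<and> (\<forall>n. lspan (\<Union>i\<le>n. Mg i) = coradfilt Del n)
     \<and> (\<forall>n x. x \<in> Mg n \<longrightarrow> Del x \<in> lspan (\<Union>i\<le>n. tens_sp (Mg i) (Mg (n - i))))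
     \<and> (\<forall>n x. 1 \<le> n \<longrightarrow> x \<in> Mg n \<longrightarrow> eps x = 0)
     \<and> (\<forall>i j x y. x \<in> Mg i \<longrightarrow> y \<in> Mg j \<longrightarrow> mul x y \<in> Mg (i + j))
     \<and> one \<in> Mg 0
     \<and> (\<forall>n x. x \<in> Mg n \<longrightarrow> S x \<in> Mg n)
     \<and> (\<forall>n x. 1 \<le> n \<longrightarrow> x \<in> Mg n \<longrightarrow>
          (\<forall>y z. Phi x y z = 0 \<and> Phi y x z = 0 \<and> Phi y z x = 0) \<and> alpha x = 0 \<and> beta x = 0)"

definition gen_subalg :: "(('b::finite \<Rightarrow> 'k::field) \<Rightarrow> ('b \<Rightarrow> 'k) \<Rightarrow> ('b \<Rightarrow> 'k)) \<Rightarrow> ('b \<Rightarrow> 'k)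
    \<Rightarrow> ('b \<Rightarrow> 'k) set \<Rightarrow> ('b \<Rightarrow> 'k) set" where
  "gen_subalg mul one A = \<Inter>{B. subspace_f B \<and> one \<in> B \<and> A \<subseteq> B \<and> (\<forall>x\<in>B. \<forall>y\<in>B. mul x y \<in> B)}"

text \<open>R_g, with P the projection \<pi> onto M(0)\<close>
definition Rg :: "(('b::finite \<Rightarrow> 'k::field) \<Rightarrow> ('b \<times> 'b \<Rightarrow> 'k)) \<Rightarrow> (('b \<Rightarrow> 'k) \<Rightarrow> ('b \<Rightarrow> 'k))
    \<Rightarrow> ('b \<Rightarrow> 'k) \<Rightarrow> ('b \<Rightarrow> 'k) \<Rightarrow> ('b \<Rightarrow> 'k) set" where
  "Rg Del P one g = {m. tmap P id (Del m) = tens2 g m \<and> tmap id P (Del m) = tens2 m one}"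

definition Rset :: "(('b::finite \<Rightarrow> 'k::field) \<Rightarrow> ('b \<times> 'b \<Rightarrow> 'k)) \<Rightarrow> (('b \<Rightarrow> 'k) \<Rightarrow> ('b \<Rightarrow> 'k))
    \<Rightarrow> ('b \<Rightarrow> 'k) \<Rightarrow> ('b \<Rightarrow> 'k) set" where
  "Rset Del P one = {m. tmap id P (Del m) = tens2 m one}"

definition ginv :: "(('b \<Rightarrow> 'k) \<Rightarrow> ('b \<Rightarrow> 'k) \<Rightarrow> ('b \<Rightarrow> 'k)) \<Rightarrow> ('b \<Rightarrow> 'k) \<Rightarrow> ('b \<Rightarrow> 'k) set
    \<Rightarrow> ('b \<Rightarrow> 'k) \<Rightarrow> ('b \<Rightarrow> 'k)" where
  "ginv mul one G f = (THE h. h \<in> G \<and> mul f h = one)"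

definition gact :: "(('b \<Rightarrow> 'k::field) \<Rightarrow> ('b \<Rightarrow> 'k) \<Rightarrow> ('b \<Rightarrow> 'k)) \<Rightarrow> ('b \<Rightarrow> 'k)
    \<Rightarrow> (('b \<Rightarrow> 'k) \<Rightarrow> ('b \<Rightarrow> 'k) \<Rightarrow> ('b \<Rightarrow> 'k) \<Rightarrow> 'k) \<Rightarrow> ('b \<Rightarrow> 'k) set
    \<Rightarrow> ('b \<Rightarrow> 'k) \<Rightarrow> ('b \<Rightarrow> 'k) \<Rightarrow> ('b \<Rightarrow> 'k) \<Rightarrow> ('b \<Rightarrow> 'k)" where
  "gact mul one Phi G g f X =
     smul (Phi (mul f g) (ginv mul one G f) f / Phi f (ginv mul one G f) f)
          (mul (mul f X) (ginv mul one G f))"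

definition Phitilde :: "(('b \<Rightarrow> 'k::field) \<Rightarrow> ('b \<Rightarrow> 'k) \<Rightarrow> ('b \<Rightarrow> 'k) \<Rightarrow> 'k)
    \<Rightarrow> ('b \<Rightarrow> 'k) \<Rightarrow> ('b \<Rightarrow> 'k) \<Rightarrow> ('b \<Rightarrow> 'k) \<Rightarrow> 'k" where
  "Phitilde Phi g e f = Phi g e f * Phi e f g / Phi e g f"

end

theory Submission
  imports Defs "HOL-Algebra.Group"
begin

lemma sum_apply: "(\<Sum>i\<in>A. f i) x = (\<Sum>i\<in>A. f i x)"
  by (induct A rule: infinite_finite_induct) auto

lemma smul_apply[simp]: "smul c v i = c * v i" by (simp add: smul_def)
lemma tens2_apply[simp]: "tens2 x y (i,j) = x i * y j" by (simp add: tens2_def)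
lemma bv_apply: "bv b i = (if i = b then 1 else 0)" by (simp add: bv_def)

lemma vec_expand_pt: "(\<Sum>i\<in>UNIV. v i * bv i p) = v p" for v :: "'b::finite \<Rightarrow> 'k::field"
  by (simp add: bv_apply if_distrib[of "\<lambda>x. _ * x"] cong: if_cong)

lemma vec_expand: "(\<Sum>i\<in>UNIV. smul (v i) (bv i)) = (v::'b::finite \<Rightarrow> 'k::field)"
  by (rule ext) (simp add: sum_apply vec_expand_pt)

lemma linear_f_add: "linear_f f \<Longrightarrow> f (x + y) = f x + f y" by (simp add: linear_f_def)
lemma linear_f_smul: "linear_f f \<Longrightarrow> f (smul c x) = smul c (f x)" by (simp add: linear_f_def)
lemma linear_f_zero: "linear_f f \<Longrightarrow> f 0 = 0"
  using linear_f_smul[of f 0 0] by (simp add: smul_def[abs_def] zero_fun_def)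
lemma linear_f_sum: "linear_f f \<Longrightarrow> f (\<Sum>i\<in>A. x i) = (\<Sum>i\<in>A. f (x i))"
  by (induct A rule: infinite_finite_induct) (auto simp: linear_f_zero linear_f_add)

lemma lin_pt: "linear_f f \<Longrightarrow> (\<Sum>i\<in>UNIV. v i * f (bv i) p) = f v p"
  for f :: "('b::finite \<Rightarrow> 'k::field) \<Rightarrow> ('c \<Rightarrow> 'k)"
proof -
  assume l: "linear_f f"
  have "f v = f (\<Sum>i\<in>UNIV. smul (v i) (bv i))" by (simp only: vec_expand)
  also have "\<dots> = (\<Sum>i\<in>UNIV. smul (v i) (f (bv i)))" by (simp only: linear_f_sum[OF l] linear_f_smul[OF l])
  finally have "f v p = (\<Sum>i\<in>UNIV. smul (v i) (f (bv i))) p" by (rule arg_cong)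
  then show ?thesis by (simp only: sum_apply smul_apply)
qed

lemma linear_fn_add: "linear_fn f \<Longrightarrow> f (x + y) = f x + f y" by (simp add: linear_fn_def)
lemma linear_fn_smul: "linear_fn f \<Longrightarrow> f (smul c x) = c * f x" by (simp add: linear_fn_def)
lemma linear_fn_zero: "linear_fn f \<Longrightarrow> f 0 = 0"
  using linear_fn_smul[of f 0 0] by (simp add: smul_def[abs_def] zero_fun_def)
lemma linear_fn_sum: "linear_fn f \<Longrightarrow> f (\<Sum>i\<in>A. x i) = (\<Sum>i\<in>A. f (x i))"
  by (induct A rule: infinite_finite_induct) (auto simp: linear_fn_zero linear_fn_add)

lemma linfn_pt: "linear_fn f \<Longrightarrow> (\<Sum>i\<in>UNIV. v i * f (bv i)) = f v"
  for f :: "('b::finite \<Rightarrow> 'k::field) \<Rightarrow> 'k"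
proof -
  assume l: "linear_fn f"
  have "f v = f (\<Sum>i\<in>UNIV. smul (v i) (bv i))" by (simp only: vec_expand)
  also have "\<dots> = (\<Sum>i\<in>UNIV. v i * f (bv i))" by (simp only: linear_fn_sum[OF l] linear_fn_smul[OF l])
  finally show ?thesis by (rule sym)
qed

lemma sum_pair: "(\<Sum>(i,j)\<in>(UNIV::('b::finite\<times>'b) set). h i j) = (\<Sum>i\<in>UNIV. \<Sum>j\<in>UNIV. h i j)"
  by (simp only: sum.cartesian_product UNIV_Times_UNIV)

lemma sum_pair2: "(\<Sum>x\<in>(UNIV::('b::finite\<times>'b) set). h x) = (\<Sum>i\<in>UNIV. \<Sum>j\<in>UNIV. h (i,j))"
  by (simp only: sum.cartesian_product UNIV_Times_UNIV case_prod_eta)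

lemma tmap_pt: "tmap f h t (p,q) = (\<Sum>i\<in>UNIV. \<Sum>j\<in>UNIV. t (i,j) * f (bv i) p * h (bv j) q)"
  by (simp add: tmap_def sum_apply sum_pair2 case_prod_beta mult.assoc)


lemma smul_add: "smul c (x + y) = smul c x + smul c y" for x y :: "'a \<Rightarrow> 'k::field" by (rule ext) (simp add: algebra_simps)
lemma smul_smul: "smul a (smul b x) = smul (a*b) x" for x :: "'a \<Rightarrow> 'k::field" by (rule ext) simp
lemma smul_zero[simp]: "smul c 0 = (0::'a \<Rightarrow> 'k::field)" by (rule ext) simp
lemma smul_zero_left[simp]: "smul 0 x = (0::'a \<Rightarrow> 'k::field)" by (rule ext) simp
lemma smul_one[simp]: "smul 1 x = (x::'a \<Rightarrow> 'k::field)" by (rule ext) simp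
lemma smul_sum: "smul c (\<Sum>i\<in>A. x i) = (\<Sum>i\<in>A. smul c (x i))" for x :: "_ \<Rightarrow> 'a \<Rightarrow> 'k::field"
  by (rule ext) (simp add: sum_apply sum_distrib_left)

lemma linear_f_comp: "linear_f f \<Longrightarrow> linear_f g \<Longrightarrow> linear_f (\<lambda>x. f (g x))"
  by (simp add: linear_f_def)
lemma linear_fn_comp: "linear_fn f \<Longrightarrow> linear_f g \<Longrightarrow> linear_fn (\<lambda>x. f (g x))"
  by (simp add: linear_f_def linear_fn_def)

lemma subsp_zero: "subspace_f A \<Longrightarrow> 0 \<in> A" by (simp add: subspace_f_def)
lemma subsp_add: "subspace_f A \<Longrightarrow> x \<in> A \<Longrightarrow> y \<in> A \<Longrightarrow> x + y \<in> A" by (simp add: subspace_f_def)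
lemma subsp_smul: "subspace_f A \<Longrightarrow> x \<in> A \<Longrightarrow> smul c x \<in> A" by (simp add: subspace_f_def)
lemma subsp_sum: "subspace_f A \<Longrightarrow> (\<And>i. i \<in> F \<Longrightarrow> x i \<in> A) \<Longrightarrow> (\<Sum>i\<in>F. x i) \<in> A"
  by (induct F rule: infinite_finite_induct) (auto simp: subsp_zero subsp_add)

lemma gcomp_unique:
  assumes gr: "grading Mg" and c: "\<forall>m. c m \<in> Mg m" "finite {m. c m \<noteq> 0}" "x = (\<Sum>m | c m \<noteq> 0. c m)"
  shows "gcomp Mg n x = c n"
proof -
  from gr obtain d where d: "(\<forall>m. d m \<in> Mg m) \<and> finite {m. d m \<noteq> 0} \<and> x = (\<Sum>m | d m \<noteq> 0. d m)"
    and du: "\<And>e. (\<forall>m. e m \<in> Mg m) \<and> finite {m. e m \<noteq> 0} \<and> x = (\<Sum>m | e m \<noteq> 0. e m) \<Longrightarrow> e = d"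
    unfolding grading_def by metis
  have cd: "c = d" using du c by blast
  show ?thesis unfolding gcomp_def
  proof (rule the_equality)
    show "\<exists>c'. (\<forall>m. c' m \<in> Mg m) \<and> finite {m. c' m \<noteq> 0} \<and> x = (\<Sum>m | c' m \<noteq> 0. c' m) \<and> c n = c' n"
      using c by blast
  next
    fix v assume "\<exists>c'. (\<forall>m. c' m \<in> Mg m) \<and> finite {m. c' m \<noteq> 0} \<and> x = (\<Sum>m | c' m \<noteq> 0. c' m) \<and> v = c' n"
    then obtain c' where "(\<forall>m. c' m \<in> Mg m) \<and> finite {m. c' m \<noteq> 0} \<and> x = (\<Sum>m | c' m \<noteq> 0. c' m)" "v = c' n" by blast
    with du cd show "v = c n" by metis
  qed
qed

lemma gcomp_decomp:
  assumes gr: "grading Mg"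
  shows "(\<forall>m. gcomp Mg m x \<in> Mg m) \<and> finite {m. gcomp Mg m x \<noteq> 0} \<and> x = (\<Sum>m | gcomp Mg m x \<noteq> 0. gcomp Mg m x)"
proof -
  from gr obtain d where d: "(\<forall>m. d m \<in> Mg m)" "finite {m. d m \<noteq> 0}" "x = (\<Sum>m | d m \<noteq> 0. d m)"
    unfolding grading_def by metis
  have "\<And>m. gcomp Mg m x = d m" using gcomp_unique[OF gr d] .
  then show ?thesis using d by simp
qed

lemma grading_subsp: "grading Mg \<Longrightarrow> subspace_f (Mg n)" by (simp add: grading_def)

lemma gcomp_hom:
  assumes gr: "grading Mg" and z: "z \<in> Mg k"
  shows "gcomp Mg n z = (if n = k then z else 0)"
proof -
  let ?c = "\<lambda>m. if m = k then z else 0"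
  have 1: "\<forall>m. ?c m \<in> Mg m" using z subsp_zero[OF grading_subsp[OF gr]] by auto
  have s: "{m. ?c m \<noteq> 0} = (if z = 0 then {} else {k})" by auto
  have 2: "finite {m. ?c m \<noteq> 0}" by (simp only: s) simp
  have 3: "z = (\<Sum>m | ?c m \<noteq> 0. ?c m)" by (simp only: s) simp
  show ?thesis using gcomp_unique[OF gr 1 2 3] .
qed

lemma gcomp_expand:
  assumes gr: "grading Mg" and T: "finite T" "{m. gcomp Mg m x \<noteq> 0} \<subseteq> T"
  shows "x = (\<Sum>m\<in>T. gcomp Mg m x)"
proof -
  have "x = (\<Sum>m | gcomp Mg m x \<noteq> 0. gcomp Mg m x)" using gcomp_decomp[OF gr] by blast
  also have "\<dots> = (\<Sum>m\<in>T. gcomp Mg m x)" by (rule sum.mono_neutral_left) (use T in auto)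
  finally show ?thesis .
qed

lemma agree_f:
  assumes gr: "grading Mg" and l: "linear_f L1" "linear_f L2" and h: "\<And>n z. z \<in> Mg n \<Longrightarrow> L1 z = L2 z"
  shows "L1 x = L2 x"
proof -
  let ?T = "{m. gcomp Mg m x \<noteq> 0}"
  have e: "x = (\<Sum>m\<in>?T. gcomp Mg m x)" using gcomp_decomp[OF gr] by blast
  have "L1 x = (\<Sum>m\<in>?T. L1 (gcomp Mg m x))" by (subst e) (rule linear_f_sum[OF l(1)])
  also have "\<dots> = (\<Sum>m\<in>?T. L2 (gcomp Mg m x))" using h gcomp_decomp[OF gr] by (intro sum.cong) auto
  also have "\<dots> = L2 x" by (subst (2) e) (rule linear_f_sum[OF l(2), symmetric])
  finally show ?thesis .
qed

lemma agree_fn: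
  assumes gr: "grading Mg" and l: "linear_fn L1" "linear_fn L2" and h: "\<And>n z. z \<in> Mg n \<Longrightarrow> L1 z = L2 z"
  shows "L1 x = L2 x"
proof -
  let ?T = "{m. gcomp Mg m x \<noteq> 0}"
  have e: "x = (\<Sum>m\<in>?T. gcomp Mg m x)" using gcomp_decomp[OF gr] by blast
  have "L1 x = (\<Sum>m\<in>?T. L1 (gcomp Mg m x))" by (subst e) (rule linear_fn_sum[OF l(1)])
  also have "\<dots> = (\<Sum>m\<in>?T. L2 (gcomp Mg m x))" using h gcomp_decomp[OF gr] by (intro sum.cong) auto
  also have "\<dots> = L2 x" by (subst (2) e) (rule linear_fn_sum[OF l(2), symmetric])
  finally show ?thesis .
qed

lemma gcomp_linear:
  assumes gr: "grading Mg" shows "linear_f (gcomp Mg n)"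
proof -
  have sp: "\<And>n. subspace_f (Mg n)" using grading_subsp[OF gr] .
  have add: "gcomp Mg n (x + y) = gcomp Mg n x + gcomp Mg n y" for x y n
  proof -
    let ?c = "\<lambda>m. gcomp Mg m x + gcomp Mg m y"
    let ?T = "{m. gcomp Mg m x \<noteq> 0} \<union> {m. gcomp Mg m y \<noteq> 0}"
    have fT: "finite ?T" using gcomp_decomp[OF gr] by blast
    have 1: "\<forall>m. ?c m \<in> Mg m" using gcomp_decomp[OF gr] subsp_add[OF sp] by blast
    have sub: "{m. ?c m \<noteq> 0} \<subseteq> ?T" by auto
    have 2: "finite {m. ?c m \<noteq> 0}" using finite_subset[OF sub fT] .
    have "(\<Sum>m | ?c m \<noteq> 0. ?c m) = (\<Sum>m\<in>?T. ?c m)" by (rule sum.mono_neutral_left[OF fT sub]) auto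
    also have "\<dots> = (\<Sum>m\<in>?T. gcomp Mg m x) + (\<Sum>m\<in>?T. gcomp Mg m y)" by (simp only: sum.distrib)
    also have "\<dots> = x + y" using gcomp_expand[OF gr fT, of x] gcomp_expand[OF gr fT, of y] by auto
    finally have 3: "x + y = (\<Sum>m | ?c m \<noteq> 0. ?c m)" by simp
    show ?thesis using gcomp_unique[OF gr 1 2 3] .
  qed
  have sm: "gcomp Mg n (smul a x) = smul a (gcomp Mg n x)" for a x n
  proof -
    let ?c = "\<lambda>m. smul a (gcomp Mg m x)"
    let ?T = "{m. gcomp Mg m x \<noteq> 0}"
    have fT: "finite ?T" using gcomp_decomp[OF gr] by blast
    have 1: "\<forall>m. ?c m \<in> Mg m" using gcomp_decomp[OF gr] subsp_smul[OF sp] by blast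
    have sub: "{m. ?c m \<noteq> 0} \<subseteq> ?T" by auto
    have 2: "finite {m. ?c m \<noteq> 0}" using finite_subset[OF sub fT] .
    have "(\<Sum>m | ?c m \<noteq> 0. ?c m) = (\<Sum>m\<in>?T. ?c m)" by (rule sum.mono_neutral_left[OF fT sub]) auto
    also have "\<dots> = smul a (\<Sum>m\<in>?T. gcomp Mg m x)" by (simp only: smul_sum)
    also have "\<dots> = smul a x" using gcomp_expand[OF gr fT, of x] by auto
    finally have 3: "smul a x = (\<Sum>m | ?c m \<noteq> 0. ?c m)" by simp
    show ?thesis using gcomp_unique[OF gr 1 2 3] .
  qed
  show ?thesis unfolding linear_f_def using add sm by blast
qed


lemma lspan_gen: "u \<in> A \<Longrightarrow> u \<in> lspan A"
proof -
  assume u: "u \<in> A"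
  have "finite {u} \<and> {u} \<subseteq> A \<and> u = (\<Sum>v\<in>{u}. smul ((\<lambda>_. 1) v) v)"
    using u by simp
  then show ?thesis unfolding lspan_def by (intro CollectI exI)
qed

lemma lspan_vanish:
  assumes l: "linear_f L" and z: "\<And>u. u \<in> A \<Longrightarrow> L u = 0" and v: "v \<in> lspan A"
  shows "L v = 0"
proof -
  from v obtain F c where F: "finite F" "F \<subseteq> A" "v = (\<Sum>u\<in>F. smul (c u) u)" unfolding lspan_def by blast
  have "L v = (\<Sum>u\<in>F. smul (c u) (L u))" by (simp only: F(3) linear_f_sum[OF l] linear_f_smul[OF l])
  also have "\<dots> = 0" using z F(2) by (intro sum.neutral) auto
  finally show ?thesis .
qed

lemma lspan_subsp: "subspace_f B \<Longrightarrow> A \<subseteq> B \<Longrightarrow> lspan A \<subseteq> B"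
proof
  fix v assume B: "subspace_f B" and A: "A \<subseteq> B" and v: "v \<in> lspan A"
  from v obtain F c where F: "finite F" "F \<subseteq> A" "v = (\<Sum>u\<in>F. smul (c u) u)" unfolding lspan_def by blast
  show "v \<in> B" unfolding F(3) by (rule subsp_sum[OF B], rule subsp_smul[OF B]) (use F(2) A in blast)
qed

locale LM =
  fixes Del :: "('b::finite \<Rightarrow> 'k::field) \<Rightarrow> ('b \<times> 'b \<Rightarrow> 'k)"
    and eps :: "('b \<Rightarrow> 'k) \<Rightarrow> 'k"
    and mul :: "('b \<Rightarrow> 'k) \<Rightarrow> ('b \<Rightarrow> 'k) \<Rightarrow> ('b \<Rightarrow> 'k)"
    and one :: "'b \<Rightarrow> 'k"
    and Phi Phiinv :: "('b \<Rightarrow> 'k) \<Rightarrow> ('b \<Rightarrow> 'k) \<Rightarrow> ('b \<Rightarrow> 'k) \<Rightarrow> 'k"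
    and S :: "('b \<Rightarrow> 'k) \<Rightarrow> ('b \<Rightarrow> 'k)"
    and alpha beta :: "('b \<Rightarrow> 'k) \<Rightarrow> 'k"
    and Mg :: "nat \<Rightarrow> ('b \<Rightarrow> 'k) set"
    and G :: "('b \<Rightarrow> 'k) set"
  assumes majid: "majid_algebra Del eps mul one Phi Phiinv S alpha beta"
    and graded: "graded_majid Del eps mul one Phi S alpha beta Mg"
    and G_def: "G = grouplikes Del eps"
    and G_finite: "finite G"
    and G_group: "\<forall>g\<in>G. \<forall>h\<in>G. mul g h \<in> G"
    and G_inv: "\<forall>g\<in>G. \<exists>h\<in>G. mul g h = one \<and> mul h g = one"
    and G_abelian: "\<forall>g\<in>G. \<forall>h\<in>G. mul g h = mul h g"
begin

lemma coal: "coalgebra Del eps" using majid unfolding majid_algebra_def by blast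
lemma linDel: "linear_f Del" using coal unfolding coalgebra_def by blast
lemma linEps: "linear_fn eps" using coal unfolding coalgebra_def by blast
lemma coassoc: "(\<Sum>m\<in>UNIV. Del x (m,l) * Del (bv m) (i,j)) = (\<Sum>m\<in>UNIV. Del x (i,m) * Del (bv m) (j,l))"
  using coal unfolding coalgebra_def D2_def by blast
lemma counitL: "(\<Sum>i\<in>UNIV. Del x (i,j) * eps (bv i)) = x j" using coal unfolding coalgebra_def by blast
lemma counitR: "(\<Sum>j\<in>UNIV. Del x (i,j) * eps (bv j)) = x i" using coal unfolding coalgebra_def by blast
lemma bilin: "bilinear_f mul" using majid unfolding majid_algebra_def by (elim conjE) assumption
lemma linMulR: "linear_f (mul x)" using bilin unfolding bilinear_f_def by blast
lemma linMulL: "linear_f (\<lambda>x. mul x y)" using bilin unfolding bilinear_f_def by blast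
lemma unit_all: "\<forall>x. mul one x = x \<and> mul x one = x" using majid unfolding majid_algebra_def by (elim conjE) assumption
lemma unitL: "mul one x = x" using unit_all by blast
lemma unitR: "mul x one = x" using unit_all by blast
lemma mulDel_all: "\<forall>x y i j. Del (mul x y) (i,j) = (\<Sum>(a,a')\<in>UNIV. \<Sum>(b,b')\<in>UNIV. Del x (a,a') * Del y (b,b')
              * mul (bv a) (bv b) i * mul (bv a') (bv b') j)"
  using majid unfolding majid_algebra_def by (elim conjE) assumption
lemma mulDel: "Del (mul x y) (i,j) = (\<Sum>(a,a')\<in>UNIV. \<Sum>(b,b')\<in>UNIV. Del x (a,a') * Del y (b,b')
              * mul (bv a) (bv b) i * mul (bv a') (bv b') j)"
  using mulDel_all by blast
lemma Del_one: "Del one = tens2 one one" using majid unfolding majid_algebra_def by blast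
lemma eps_one: "eps one = 1" using majid unfolding majid_algebra_def by blast
lemma triPhi: "trilinear_fn Phi" using majid unfolding majid_algebra_def by blast
lemma linPhi1: "linear_fn (\<lambda>x. Phi x y z)" using triPhi unfolding trilinear_fn_def by blast
lemma linPhi2: "linear_fn (\<lambda>y. Phi x y z)" using triPhi unfolding trilinear_fn_def by blast
lemma linPhi3: "linear_fn (\<lambda>z. Phi x y z)" using triPhi unfolding trilinear_fn_def by blast
lemma triPhiinv: "trilinear_fn Phiinv" using majid unfolding majid_algebra_def by blast
lemma assocM: "(\<Sum>(a,a')\<in>UNIV. \<Sum>(b,b')\<in>UNIV. \<Sum>(c,c')\<in>UNIV.
            smul (Del x (a,a') * Del y (b,b') * Del z (c,c') * Phi (bv a') (bv b') (bv c'))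
                 (mul (bv a) (mul (bv b) (bv c))))
       = (\<Sum>(a,a')\<in>UNIV. \<Sum>(b,b')\<in>UNIV. \<Sum>(c,c')\<in>UNIV.
            smul (Del x (a,a') * Del y (b,b') * Del z (c,c') * Phi (bv a) (bv b) (bv c))
                 (mul (mul (bv a') (bv b')) (bv c')))"
  using majid unfolding majid_algebra_def by blast
lemma cocyc: "(\<Sum>(a1,a2)\<in>UNIV. \<Sum>(b1,b2)\<in>UNIV. \<Sum>(c1,c2)\<in>UNIV. \<Sum>(d1,d2)\<in>UNIV.
            Del x (a1,a2) * Del y (b1,b2) * Del z (c1,c2) * Del w (d1,d2)
            * Phi (bv a1) (bv b1) (mul (bv c1) (bv d1)) * Phi (mul (bv a2) (bv b2)) (bv c2) (bv d2))
       = (\<Sum>(a1,a2)\<in>UNIV. \<Sum>(b1,b2,b3)\<in>UNIV. \<Sum>(c1,c2,c3)\<in>UNIV. \<Sum>(d1,d2)\<in>UNIV.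
            Del x (a1,a2) * D2 Del y b1 b2 b3 * D2 Del z c1 c2 c3 * Del w (d1,d2)
            * Phi (bv b1) (bv c1) (bv d1) * Phi (bv a1) (mul (bv b2) (bv c2)) (bv d2)
            * Phi (bv a2) (bv b3) (bv c3))"
  using majid unfolding majid_algebra_def by blast
lemma Phi_norm: "Phi x one y = eps x * eps y" using majid unfolding majid_algebra_def by blast
lemma Phi_inv: "(\<Sum>(a,a')\<in>UNIV. \<Sum>(b,b')\<in>UNIV. \<Sum>(c,c')\<in>UNIV.
            Del x (a,a') * Del y (b,b') * Del z (c,c') * Phi (bv a) (bv b) (bv c) * Phiinv (bv a') (bv b') (bv c'))
          = eps x * eps y * eps z"
  using majid unfolding majid_algebra_def by blast

lemma gr: "grading Mg" using graded unfolding graded_majid_def by blast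
lemma Mg0: "Mg 0 = lspan G" using graded unfolding graded_majid_def G_def by blast
lemma Del_hom: "x \<in> Mg n \<Longrightarrow> Del x \<in> lspan (\<Union>i\<le>n. tens_sp (Mg i) (Mg (n - i)))"
  using graded unfolding graded_majid_def by blast
lemma eps_hom: "1 \<le> n \<Longrightarrow> x \<in> Mg n \<Longrightarrow> eps x = 0" using graded unfolding graded_majid_def by blast
lemma mul_hom: "x \<in> Mg i \<Longrightarrow> y \<in> Mg j \<Longrightarrow> mul x y \<in> Mg (i + j)" using graded unfolding graded_majid_def by blast
lemma one_Mg0: "one \<in> Mg 0" using graded unfolding graded_majid_def by blast
lemma Phi_hom: "1 \<le> n \<Longrightarrow> x \<in> Mg n \<Longrightarrow> Phi x y z = 0 \<and> Phi y x z = 0 \<and> Phi y z x = 0"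
  using graded unfolding graded_majid_def by blast

end

context LM begin

abbreviation "P \<equiv> gcomp Mg 0"

lemma linP: "linear_f P" by (rule gcomp_linear[OF gr])
lemma spMg: "subspace_f (Mg n)" by (rule grading_subsp[OF gr])
lemma P_hom: "z \<in> Mg n \<Longrightarrow> P z = (if n = 0 then z else 0)"
  using gcomp_hom[OF gr] by (metis)
lemma G_Mg0: "g \<in> G \<Longrightarrow> g \<in> Mg 0" by (simp only: Mg0 lspan_gen)
lemma P_G: "g \<in> G \<Longrightarrow> P g = g" using P_hom[OF G_Mg0] by simp
lemma P_in: "P x \<in> Mg 0" using gcomp_decomp[OF gr] by blast
lemma PP: "P (P x) = P x" using P_hom[OF P_in] by simp
lemma G_Del: "g \<in> G \<Longrightarrow> Del g = tens2 g g" using G_def unfolding grouplikes_def by blast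
lemma G_eps: "g \<in> G \<Longrightarrow> eps g = 1" using G_def unfolding grouplikes_def by blast
lemma one_G: "one \<in> G" using G_def Del_one eps_one unfolding grouplikes_def by blast
lemma P_one: "P one = one" using P_G[OF one_G] .
lemma mul_zeroR[simp]: "mul x 0 = 0" using linear_f_zero[OF linMulR] .
lemma mul_zeroL[simp]: "mul 0 x = 0" using linear_f_zero[OF linMulL, of x] .
lemma linId: "linear_f (\<lambda>x. x)" by (simp add: linear_f_def)

lemma eps_P: "eps x = eps (P x)"
proof (rule agree_fn[OF gr linEps linear_fn_comp[OF linEps linP]])
  fix n z assume z: "z \<in> Mg n"
  show "eps z = eps (P z)"
  proof (cases "n = 0")
    case True then show ?thesis using P_hom[OF z] by simp
  next
    case False then show ?thesis using P_hom[OF z] eps_hom[OF _ z] linear_fn_zero[OF linEps] by simp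
  qed
qed

lemma Phi_P1: "Phi x y z = Phi (P x) y z"
proof (rule agree_fn[OF gr linPhi1 linear_fn_comp[OF linPhi1 linP]])
  fix n w assume w: "w \<in> Mg n"
  show "Phi w y z = Phi (P w) y z"
  proof (cases "n = 0")
    case True then show ?thesis using P_hom[OF w] by simp
  next
    case False then show ?thesis using P_hom[OF w] Phi_hom[OF _ w] linear_fn_zero[OF linPhi1] by simp
  qed
qed

lemma Phi_P2: "Phi x y z = Phi x (P y) z"
proof (rule agree_fn[OF gr linPhi2 linear_fn_comp[OF linPhi2 linP]])
  fix n w assume w: "w \<in> Mg n"
  show "Phi x w z = Phi x (P w) z"
  proof (cases "n = 0")
    case True then show ?thesis using P_hom[OF w] by simp
  next
    case False then show ?thesis using P_hom[OF w] Phi_hom[OF _ w] linear_fn_zero[OF linPhi2] by simp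
  qed
qed

lemma Phi_P3: "Phi x y z = Phi x y (P z)"
proof (rule agree_fn[OF gr linPhi3 linear_fn_comp[OF linPhi3 linP]])
  fix n w assume w: "w \<in> Mg n"
  show "Phi x y w = Phi x y (P w)"
  proof (cases "n = 0")
    case True then show ?thesis using P_hom[OF w] by simp
  next
    case False then show ?thesis using P_hom[OF w] Phi_hom[OF _ w] linear_fn_zero[OF linPhi3] by simp
  qed
qed

lemma P_mul: "P (mul x y) = mul (P x) (P y)"
proof -
  have hom: "P (mul z y) = mul (P z) (P y)" if z: "z \<in> Mg n" for z n
  proof (rule agree_f[OF gr linear_f_comp[OF linP linMulR] linear_f_comp[OF linMulR linP]])
    fix m w assume w: "w \<in> Mg m"
    have "mul z w \<in> Mg (n + m)" by (rule mul_hom[OF z w])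
    then show "P (mul z w) = mul (P z) (P w)" using P_hom[OF z] P_hom[OF w] P_hom[of "mul z w" "n+m"] by auto
  qed
  show ?thesis
  proof (rule agree_f[OF gr linear_f_comp[OF linP linMulL] linear_f_comp[OF linMulL linP]])
    fix n z assume z: "z \<in> Mg n"
    show "P (mul z y) = mul (P z) (P y)" by (rule hom[OF z])
  qed
qed

end

lemma nest2: "(\<Sum>i\<in>UNIV. \<Sum>j\<in>UNIV. g i j) = (\<Sum>(i,j)\<in>UNIV. g i j)" for g :: "'a::finite \<Rightarrow> 'b::finite \<Rightarrow> 'c::comm_monoid_add"
  by (simp only: sum.cartesian_product UNIV_Times_UNIV)

lemma swap6: "(\<Sum>a\<in>UNIV. \<Sum>a'\<in>UNIV. \<Sum>b\<in>UNIV. \<Sum>b'\<in>UNIV. \<Sum>c\<in>UNIV. \<Sum>c'\<in>UNIV. f a a' b b' c c')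
  = (\<Sum>a\<in>UNIV. \<Sum>b\<in>UNIV. \<Sum>c\<in>UNIV. \<Sum>a'\<in>UNIV. \<Sum>b'\<in>UNIV. \<Sum>c'\<in>UNIV. f a a' b b' c c')"
  for f :: "'b::finite \<Rightarrow> 'b \<Rightarrow> 'b \<Rightarrow> 'b \<Rightarrow> 'b \<Rightarrow> 'b \<Rightarrow> 'k::comm_monoid_add"
  apply (simp only: nest2)
  apply (rule sum.reindex_bij_witness[where i="\<lambda>(a,b,c,a',b',c'). (a,a',b,b',c,c')" and j="\<lambda>(a,a',b,b',c,c'). (a,b,c,a',b',c')"])
  apply auto
  done

lemma swap6b: "(\<Sum>p\<in>UNIV. \<Sum>q\<in>UNIV. \<Sum>s\<in>UNIV. \<Sum>t\<in>UNIV. \<Sum>u\<in>UNIV. \<Sum>v\<in>UNIV. f p q s t u v)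
  = (\<Sum>q\<in>UNIV. \<Sum>t\<in>UNIV. \<Sum>v\<in>UNIV. \<Sum>p\<in>UNIV. \<Sum>s\<in>UNIV. \<Sum>u\<in>UNIV. f p q s t u v)"
  for f :: "'b::finite \<Rightarrow> 'b \<Rightarrow> 'b \<Rightarrow> 'b \<Rightarrow> 'b \<Rightarrow> 'b \<Rightarrow> 'k::comm_monoid_add"
  apply (simp only: nest2)
  apply (rule sum.reindex_bij_witness[where i="\<lambda>(q,t,v,p,s,u). (p,q,s,t,u,v)" and j="\<lambda>(p,q,s,t,u,v). (q,t,v,p,s,u)"])
  apply auto
  done

lemma K3:
  fixes F :: "('b::finite \<Rightarrow> 'k::field) \<Rightarrow> ('b \<Rightarrow> 'k) \<Rightarrow> ('b \<Rightarrow> 'k) \<Rightarrow> 'k"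
  assumes hz: "\<And>u v. (\<Sum>c'\<in>UNIV. Dz c' * F u v (bv c')) = zc * F u v \<zeta>"
      and hy: "\<And>u w. (\<Sum>b'\<in>UNIV. Dy b' * F u (bv b') w) = yb * F u \<eta> w"
      and hx: "\<And>v w. (\<Sum>a'\<in>UNIV. Dx a' * F (bv a') v w) = xa * F \<xi> v w"
  shows "(\<Sum>a'\<in>UNIV. \<Sum>b'\<in>UNIV. \<Sum>c'\<in>UNIV. Dx a' * Dy b' * Dz c' * F (bv a') (bv b') (bv c')) = xa*yb*zc*F \<xi> \<eta> \<zeta>"
proof -
  have "(\<Sum>a'\<in>UNIV. \<Sum>b'\<in>UNIV. \<Sum>c'\<in>UNIV. Dx a' * Dy b' * Dz c' * F (bv a') (bv b') (bv c'))
      = (\<Sum>a'\<in>UNIV. \<Sum>b'\<in>UNIV. Dx a' * Dy b' * (\<Sum>c'\<in>UNIV. Dz c' * F (bv a') (bv b') (bv c')))"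
    by (simp only: sum_distrib_left mult.assoc)
  also have "\<dots> = (\<Sum>a'\<in>UNIV. \<Sum>b'\<in>UNIV. Dx a' * Dy b' * (zc * F (bv a') (bv b') \<zeta>))"
    by (simp only: hz)
  also have "\<dots> = (\<Sum>a'\<in>UNIV. Dx a' * zc * (\<Sum>b'\<in>UNIV. Dy b' * F (bv a') (bv b') \<zeta>))"
    by (simp only: sum_distrib_left mult_ac)
  also have "\<dots> = (\<Sum>a'\<in>UNIV. Dx a' * zc * (yb * F (bv a') \<eta> \<zeta>))"
    by (simp only: hy)
  also have "\<dots> = zc * yb * (\<Sum>a'\<in>UNIV. Dx a' * F (bv a') \<eta> \<zeta>)"
    by (simp only: sum_distrib_left mult_ac)
  also have "\<dots> = xa*yb*zc*F \<xi> \<eta> \<zeta>" by (simp only: hx mult_ac)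
  finally show ?thesis .
qed

context LM begin

definition C :: "('b \<Rightarrow> 'k) \<Rightarrow> ('b \<Rightarrow> 'k) \<Rightarrow> ('b \<Rightarrow> 'k) set" where
  "C h k = {Y. tmap P id (Del Y) = tens2 h Y \<and> tmap id P (Del Y) = tens2 Y k}"

lemma tmap_idP_pt: "tmap id P t (p,q) = P (\<lambda>j. t (p,j)) q"
proof -
  have "tmap id P t (p,q) = (\<Sum>i\<in>UNIV. \<Sum>j\<in>UNIV. t (i,j) * bv i p * P (bv j) q)"
    by (simp only: tmap_pt id_apply)
  also have "\<dots> = (\<Sum>i\<in>UNIV. (\<Sum>j\<in>UNIV. t (i,j) * P (bv j) q) * bv i p)"
    by (rule sum.cong[OF refl], simp only: sum_distrib_right, rule sum.cong[OF refl], simp only: mult_ac)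
  also have "\<dots> = (\<Sum>j\<in>UNIV. t (p,j) * P (bv j) q)" by (rule vec_expand_pt)
  also have "\<dots> = P (\<lambda>j. t (p,j)) q" by (rule lin_pt[OF linP])
  finally show ?thesis .
qed

lemma tmap_Pid_pt: "tmap P id t (p,q) = P (\<lambda>i. t (i,q)) p"
proof -
  have "tmap P id t (p,q) = (\<Sum>i\<in>UNIV. \<Sum>j\<in>UNIV. t (i,j) * P (bv i) p * bv j q)"
    by (simp only: tmap_pt id_apply)
  also have "\<dots> = (\<Sum>i\<in>UNIV. t (i,q) * P (bv i) p)" by (simp only: vec_expand_pt)
  also have "\<dots> = P (\<lambda>i. t (i,q)) p" by (rule lin_pt[OF linP])
  finally show ?thesis .
qed

end

context LM begin

lemma G_C: "g \<in> G \<Longrightarrow> g \<in> C g g"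
proof -
  assume g: "g \<in> G"
  have 1: "tmap P id (Del g) = tens2 g g"
  proof (rule ext, clarify)
    fix p q
    have "(\<lambda>i. Del g (i,q)) = smul (g q) g" by (rule ext) (simp add: G_Del[OF g] mult.commute)
    then show "tmap P id (Del g) (p,q) = tens2 g g (p,q)"
      by (simp add: tmap_Pid_pt linear_f_smul[OF linP] P_G[OF g] mult.commute)
  qed
  have 2: "tmap id P (Del g) = tens2 g g"
  proof (rule ext, clarify)
    fix p q
    have "(\<lambda>j. Del g (p,j)) = smul (g p) g" by (rule ext) (simp add: G_Del[OF g])
    then show "tmap id P (Del g) (p,q) = tens2 g g (p,q)"
      by (simp add: tmap_idP_pt linear_f_smul[OF linP] P_G[OF g])
  qed
  show ?thesis unfolding C_def using 1 2 by blast
qed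

lemma collR:
  assumes Y: "Y \<in> C h k" and l: "linear_fn \<phi>" and p: "\<And>x. \<phi> x = \<phi> (P x)"
  shows "(\<Sum>c'\<in>UNIV. Del Y (c,c') * \<phi> (bv c')) = Y c * \<phi> k"
proof -
  have "P (\<lambda>j. Del Y (c,j)) = smul (Y c) k"
  proof (rule ext)
    fix q
    have "P (\<lambda>j. Del Y (c,j)) q = tmap id P (Del Y) (c,q)" by (simp only: tmap_idP_pt)
    also have "\<dots> = Y c * k q" using Y unfolding C_def by simp
    finally show "P (\<lambda>j. Del Y (c,j)) q = smul (Y c) k q" by simp
  qed
  then have "\<phi> (\<lambda>j. Del Y (c,j)) = Y c * \<phi> k" using p linear_fn_smul[OF l] by metis
  then show ?thesis using linfn_pt[OF l] by simp
qed

lemma collL: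
  assumes Y: "Y \<in> C h k" and l: "linear_fn \<phi>" and p: "\<And>x. \<phi> x = \<phi> (P x)"
  shows "(\<Sum>c'\<in>UNIV. Del Y (c',c) * \<phi> (bv c')) = Y c * \<phi> h"
proof -
  have "P (\<lambda>i. Del Y (i,c)) = smul (Y c) h"
  proof (rule ext)
    fix p
    have "P (\<lambda>i. Del Y (i,c)) p = tmap P id (Del Y) (p,c)" by (simp only: tmap_Pid_pt)
    also have "\<dots> = h p * Y c" using Y unfolding C_def by simp
    finally show "P (\<lambda>i. Del Y (i,c)) p = smul (Y c) h p" by (simp add: mult.commute)
  qed
  then have "\<phi> (\<lambda>i. Del Y (i,c)) = Y c * \<phi> h" using p linear_fn_smul[OF l] by metis
  then show ?thesis using linfn_pt[OF l] by simp
qed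

lemma assoc_coord: "(\<Sum>a\<in>UNIV. \<Sum>b\<in>UNIV. \<Sum>c\<in>UNIV. (\<Sum>a'\<in>UNIV. \<Sum>b'\<in>UNIV. \<Sum>c'\<in>UNIV.
      Del x (a,a') * Del y (b,b') * Del z (c,c') * Phi (bv a') (bv b') (bv c')) * mul (bv a) (mul (bv b) (bv c)) r)
  = (\<Sum>a\<in>UNIV. \<Sum>b\<in>UNIV. \<Sum>c\<in>UNIV. (\<Sum>a'\<in>UNIV. \<Sum>b'\<in>UNIV. \<Sum>c'\<in>UNIV.
      Del x (a',a) * Del y (b',b) * Del z (c',c) * Phi (bv a') (bv b') (bv c')) * mul (mul (bv a) (bv b)) (bv c) r)"
proof -
  have e: "(\<Sum>a\<in>UNIV. \<Sum>a'\<in>UNIV. \<Sum>b\<in>UNIV. \<Sum>b'\<in>UNIV. \<Sum>c\<in>UNIV. \<Sum>c'\<in>UNIV.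
      Del x (a,a') * Del y (b,b') * Del z (c,c') * Phi (bv a') (bv b') (bv c') * mul (bv a) (mul (bv b) (bv c)) r)
    = (\<Sum>a\<in>UNIV. \<Sum>a'\<in>UNIV. \<Sum>b\<in>UNIV. \<Sum>b'\<in>UNIV. \<Sum>c\<in>UNIV. \<Sum>c'\<in>UNIV.
      Del x (a,a') * Del y (b,b') * Del z (c,c') * Phi (bv a) (bv b) (bv c) * mul (mul (bv a') (bv b')) (bv c') r)"
    using fun_cong[OF assocM[of x y z], of r] by (simp only: sum_pair sum_apply smul_apply)
  show ?thesis
    apply (simp only: sum_distrib_right)
    apply (subst swap6[symmetric])
    apply (subst e)
    apply (subst swap6b)
    apply (rule refl)
    done
qed

lemma MA: "(\<Sum>a\<in>UNIV. \<Sum>b\<in>UNIV. \<Sum>c\<in>UNIV. (x a * y b * z c * s) * mul (bv a) (mul (bv b) (bv c)) r)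
   = s * mul x (mul y z) r"
proof -
  have "(\<Sum>a\<in>UNIV. \<Sum>b\<in>UNIV. \<Sum>c\<in>UNIV. (x a * y b * z c * s) * mul (bv a) (mul (bv b) (bv c)) r)
     = s * (\<Sum>a\<in>UNIV. x a * (\<Sum>b\<in>UNIV. y b * (\<Sum>c\<in>UNIV. z c * mul (bv a) (mul (bv b) (bv c)) r)))"
    by (simp only: sum_distrib_left mult_ac)
  also have "\<dots> = s * (\<Sum>a\<in>UNIV. x a * (\<Sum>b\<in>UNIV. y b * mul (bv a) (mul (bv b) z) r))"
    by (simp only: lin_pt[OF linear_f_comp[OF linMulR linMulR]])
  also have "\<dots> = s * (\<Sum>a\<in>UNIV. x a * mul (bv a) (mul y z) r)"
    by (simp only: lin_pt[OF linear_f_comp[OF linMulR linMulL]])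
  also have "\<dots> = s * mul x (mul y z) r"
    by (simp only: lin_pt[OF linMulL])
  finally show ?thesis .
qed

lemma MB: "(\<Sum>a\<in>UNIV. \<Sum>b\<in>UNIV. \<Sum>c\<in>UNIV. (x a * y b * z c * s) * mul (mul (bv a) (bv b)) (bv c) r)
   = s * mul (mul x y) z r"
proof -
  have "(\<Sum>a\<in>UNIV. \<Sum>b\<in>UNIV. \<Sum>c\<in>UNIV. (x a * y b * z c * s) * mul (mul (bv a) (bv b)) (bv c) r)
     = s * (\<Sum>a\<in>UNIV. x a * (\<Sum>b\<in>UNIV. y b * (\<Sum>c\<in>UNIV. z c * mul (mul (bv a) (bv b)) (bv c) r)))"
    by (simp only: sum_distrib_left mult_ac)
  also have "\<dots> = s * (\<Sum>a\<in>UNIV. x a * (\<Sum>b\<in>UNIV. y b * mul (mul (bv a) (bv b)) z r))"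
    by (simp only: lin_pt[OF linMulR])
  also have "\<dots> = s * (\<Sum>a\<in>UNIV. x a * mul (mul (bv a) y) z r)"
    by (simp only: lin_pt[OF linear_f_comp[OF linMulL linMulR]])
  also have "\<dots> = s * mul (mul x y) z r"
    by (simp only: lin_pt[OF linear_f_comp[OF linMulL linMulL]])
  finally show ?thesis .
qed

end

context LM begin

lemma C_assoc:
  assumes x: "x \<in> C h1 k1" and y: "y \<in> C h2 k2" and z: "z \<in> C h3 k3"
  shows "smul (Phi k1 k2 k3) (mul x (mul y z)) = smul (Phi h1 h2 h3) (mul (mul x y) z)"
proof (rule ext)
  fix r
  have K1: "(\<Sum>a'\<in>UNIV. \<Sum>b'\<in>UNIV. \<Sum>c'\<in>UNIV. Del x (a,a') * Del y (b,b') * Del z (c,c') * Phi (bv a') (bv b') (bv c'))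
      = x a * y b * z c * Phi k1 k2 k3" for a b c
  proof (rule K3)
    fix u v show "(\<Sum>c'\<in>UNIV. Del z (c,c') * Phi u v (bv c')) = z c * Phi u v k3"
      by (rule collR[OF z linPhi3 Phi_P3])
  next
    fix u w show "(\<Sum>b'\<in>UNIV. Del y (b,b') * Phi u (bv b') w) = y b * Phi u k2 w"
      using collR[OF y linPhi2 Phi_P2] .
  next
    fix v w show "(\<Sum>a'\<in>UNIV. Del x (a,a') * Phi (bv a') v w) = x a * Phi k1 v w"
      using collR[OF x linPhi1 Phi_P1] .
  qed
  have K2: "(\<Sum>a'\<in>UNIV. \<Sum>b'\<in>UNIV. \<Sum>c'\<in>UNIV. Del x (a',a) * Del y (b',b) * Del z (c',c) * Phi (bv a') (bv b') (bv c'))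
      = x a * y b * z c * Phi h1 h2 h3" for a b c
  proof (rule K3)
    fix u v show "(\<Sum>c'\<in>UNIV. Del z (c',c) * Phi u v (bv c')) = z c * Phi u v h3"
      by (rule collL[OF z linPhi3 Phi_P3])
  next
    fix u w show "(\<Sum>b'\<in>UNIV. Del y (b',b) * Phi u (bv b') w) = y b * Phi u h2 w"
      using collL[OF y linPhi2 Phi_P2] .
  next
    fix v w show "(\<Sum>a'\<in>UNIV. Del x (a',a) * Phi (bv a') v w) = x a * Phi h1 v w"
      using collL[OF x linPhi1 Phi_P1] .
  qed
  have "smul (Phi k1 k2 k3) (mul x (mul y z)) r = Phi k1 k2 k3 * mul x (mul y z) r" by simp
  also have "\<dots> = (\<Sum>a\<in>UNIV. \<Sum>b\<in>UNIV. \<Sum>c\<in>UNIV. (x a * y b * z c * Phi k1 k2 k3) * mul (bv a) (mul (bv b) (bv c)) r)"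
    by (rule MA[symmetric])
  also have "\<dots> = (\<Sum>a\<in>UNIV. \<Sum>b\<in>UNIV. \<Sum>c\<in>UNIV. (\<Sum>a'\<in>UNIV. \<Sum>b'\<in>UNIV. \<Sum>c'\<in>UNIV.
      Del x (a,a') * Del y (b,b') * Del z (c,c') * Phi (bv a') (bv b') (bv c')) * mul (bv a) (mul (bv b) (bv c)) r)"
    by (simp only: K1)
  also have "\<dots> = (\<Sum>a\<in>UNIV. \<Sum>b\<in>UNIV. \<Sum>c\<in>UNIV. (\<Sum>a'\<in>UNIV. \<Sum>b'\<in>UNIV. \<Sum>c'\<in>UNIV.
      Del x (a',a) * Del y (b',b) * Del z (c',c) * Phi (bv a') (bv b') (bv c')) * mul (mul (bv a) (bv b)) (bv c) r)"
    by (rule assoc_coord)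
  also have "\<dots> = (\<Sum>a\<in>UNIV. \<Sum>b\<in>UNIV. \<Sum>c\<in>UNIV. (x a * y b * z c * Phi h1 h2 h3) * mul (mul (bv a) (bv b)) (bv c) r)"
    by (simp only: K2)
  also have "\<dots> = Phi h1 h2 h3 * mul (mul x y) z r" by (rule MB)
  finally show "smul (Phi k1 k2 k3) (mul x (mul y z)) r = smul (Phi h1 h2 h3) (mul (mul x y) z) r" by simp
qed

end

lemma coll3:
  fixes F :: "('b::finite \<Rightarrow> 'k::field) \<Rightarrow> ('b \<Rightarrow> 'k) \<Rightarrow> ('b \<Rightarrow> 'k) \<Rightarrow> 'k"
  assumes l1: "\<And>q r. linear_fn (\<lambda>p. F p q r)" and l2: "\<And>p r. linear_fn (\<lambda>q. F p q r)"
    and l3: "\<And>p q. linear_fn (\<lambda>r. F p q r)"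
  shows "(\<Sum>a\<in>UNIV. \<Sum>b\<in>UNIV. \<Sum>c\<in>UNIV. x a * y b * z c * F (bv a) (bv b) (bv c)) = F x y z"
proof -
  have "(\<Sum>a\<in>UNIV. \<Sum>b\<in>UNIV. \<Sum>c\<in>UNIV. x a * y b * z c * F (bv a) (bv b) (bv c))
     = (\<Sum>a\<in>UNIV. x a * (\<Sum>b\<in>UNIV. y b * (\<Sum>c\<in>UNIV. z c * F (bv a) (bv b) (bv c))))"
    by (simp only: sum_distrib_left mult_ac)
  also have "\<dots> = F x y z" by (simp only: linfn_pt[OF l3] linfn_pt[OF l2] linfn_pt[OF l1])
  finally show ?thesis .
qed

lemma coll4:
  fixes F :: "('b::finite \<Rightarrow> 'k::field) \<Rightarrow> ('b \<Rightarrow> 'k) \<Rightarrow> ('b \<Rightarrow> 'k) \<Rightarrow> ('b \<Rightarrow> 'k) \<Rightarrow> 'k"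
  assumes l1: "\<And>q r s. linear_fn (\<lambda>p. F p q r s)" and l2: "\<And>p r s. linear_fn (\<lambda>q. F p q r s)"
    and l3: "\<And>p q s. linear_fn (\<lambda>r. F p q r s)" and l4: "\<And>p q r. linear_fn (\<lambda>s. F p q r s)"
  shows "(\<Sum>a\<in>UNIV. \<Sum>b\<in>UNIV. \<Sum>c\<in>UNIV. \<Sum>d\<in>UNIV. x a * y b * z c * w d * F (bv a) (bv b) (bv c) (bv d)) = F x y z w"
proof -
  have "(\<Sum>a\<in>UNIV. \<Sum>b\<in>UNIV. \<Sum>c\<in>UNIV. \<Sum>d\<in>UNIV. x a * y b * z c * w d * F (bv a) (bv b) (bv c) (bv d))
     = (\<Sum>a\<in>UNIV. x a * (\<Sum>b\<in>UNIV. y b * (\<Sum>c\<in>UNIV. z c * (\<Sum>d\<in>UNIV. w d * F (bv a) (bv b) (bv c) (bv d)))))"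
    by (simp only: sum_distrib_left mult_ac)
  also have "\<dots> = F x y z w" by (simp only: linfn_pt[OF l4] linfn_pt[OF l3] linfn_pt[OF l2] linfn_pt[OF l1])
  finally show ?thesis .
qed

lemma swap8: "(\<Sum>a1\<in>UNIV. \<Sum>a2\<in>UNIV. \<Sum>b1\<in>UNIV. \<Sum>b2\<in>UNIV. \<Sum>c1\<in>UNIV. \<Sum>c2\<in>UNIV. \<Sum>d1\<in>UNIV. \<Sum>d2\<in>UNIV. f a1 a2 b1 b2 c1 c2 d1 d2)
  = (\<Sum>a1\<in>UNIV. \<Sum>b1\<in>UNIV. \<Sum>c1\<in>UNIV. \<Sum>d1\<in>UNIV. \<Sum>a2\<in>UNIV. \<Sum>b2\<in>UNIV. \<Sum>c2\<in>UNIV. \<Sum>d2\<in>UNIV. f a1 a2 b1 b2 c1 c2 d1 d2)"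
  for f :: "'b::finite \<Rightarrow> 'b \<Rightarrow> 'b \<Rightarrow> 'b \<Rightarrow> 'b \<Rightarrow> 'b \<Rightarrow> 'b \<Rightarrow> 'b \<Rightarrow> 'k::comm_monoid_add"
  apply (simp only: nest2)
  apply (rule sum.reindex_bij_witness[where i="\<lambda>(a1,b1,c1,d1,a2,b2,c2,d2). (a1,a2,b1,b2,c1,c2,d1,d2)"
        and j="\<lambda>(a1,a2,b1,b2,c1,c2,d1,d2). (a1,b1,c1,d1,a2,b2,c2,d2)"])
  apply auto
  done

lemma swap10: "(\<Sum>a1\<in>UNIV. \<Sum>a2\<in>UNIV. \<Sum>b1\<in>UNIV. \<Sum>b2\<in>UNIV. \<Sum>b3\<in>UNIV. \<Sum>c1\<in>UNIV. \<Sum>c2\<in>UNIV. \<Sum>c3\<in>UNIV. \<Sum>d1\<in>UNIV. \<Sum>d2\<in>UNIV. f a1 a2 b1 b2 b3 c1 c2 c3 d1 d2)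
  = (\<Sum>b1\<in>UNIV. \<Sum>c1\<in>UNIV. \<Sum>d1\<in>UNIV. \<Sum>a1\<in>UNIV. \<Sum>b2\<in>UNIV. \<Sum>c2\<in>UNIV. \<Sum>d2\<in>UNIV. \<Sum>a2\<in>UNIV. \<Sum>b3\<in>UNIV. \<Sum>c3\<in>UNIV. f a1 a2 b1 b2 b3 c1 c2 c3 d1 d2)"
  for f :: "'b::finite \<Rightarrow> 'b \<Rightarrow> 'b \<Rightarrow> 'b \<Rightarrow> 'b \<Rightarrow> 'b \<Rightarrow> 'b \<Rightarrow> 'b \<Rightarrow> 'b \<Rightarrow> 'b \<Rightarrow> 'k::comm_monoid_add"
  apply (simp only: nest2)
  apply (rule sum.reindex_bij_witness[where i="\<lambda>(b1,c1,d1,a1,b2,c2,d2,a2,b3,c3). (a1,a2,b1,b2,b3,c1,c2,c3,d1,d2)"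
        and j="\<lambda>(a1,a2,b1,b2,b3,c1,c2,c3,d1,d2). (b1,c1,d1,a1,b2,c2,d2,a2,b3,c3)"])
  apply auto
  done

lemma sum_pair3: "(\<Sum>(i,j,l)\<in>(UNIV::('b::finite\<times>'b\<times>'b) set). h i j l) = (\<Sum>i\<in>UNIV. \<Sum>j\<in>UNIV. \<Sum>l\<in>UNIV. h i j l)"
  by (simp only: nest2 UNIV_Times_UNIV)


context LM begin

lemma linPhiinv1: "linear_fn (\<lambda>x. Phiinv x y z)" using triPhiinv unfolding trilinear_fn_def by blast
lemma linPhiinv2: "linear_fn (\<lambda>y. Phiinv x y z)" using triPhiinv unfolding trilinear_fn_def by blast
lemma linPhiinv3: "linear_fn (\<lambda>z. Phiinv x y z)" using triPhiinv unfolding trilinear_fn_def by blast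

lemma G_Del_pt: "g \<in> G \<Longrightarrow> Del g (i,j) = g i * g j" using G_Del by simp

lemma D2_G: assumes g: "g \<in> G" shows "D2 Del g i j l = g i * g j * g l"
proof -
  have "D2 Del g i j l = (\<Sum>m\<in>UNIV. g l * (g m * Del (bv m) (i,j)))"
    unfolding D2_def by (simp only: G_Del_pt[OF g] mult_ac)
  also have "\<dots> = g l * Del g (i,j)" by (simp only: sum_distrib_left[symmetric] lin_pt[OF linDel])
  finally show ?thesis by (simp add: G_Del_pt[OF g] mult_ac)
qed

lemma Phi_inv_G: assumes a: "a \<in> G" and b: "b \<in> G" and c: "c \<in> G"
  shows "Phi a b c * Phiinv a b c = 1"
proof -
  have "1 = eps a * eps b * eps c" by (simp add: G_eps a b c)
  also have "\<dots> = (\<Sum>a1\<in>UNIV. \<Sum>a2\<in>UNIV. \<Sum>b1\<in>UNIV. \<Sum>b2\<in>UNIV. \<Sum>c1\<in>UNIV. \<Sum>c2\<in>UNIV.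
     Del a (a1,a2) * Del b (b1,b2) * Del c (c1,c2) * Phi (bv a1) (bv b1) (bv c1) * Phiinv (bv a2) (bv b2) (bv c2))"
    using Phi_inv[of a b c] by (simp only: sum_pair)
  also have "\<dots> = (\<Sum>a1\<in>UNIV. \<Sum>b1\<in>UNIV. \<Sum>c1\<in>UNIV. \<Sum>a2\<in>UNIV. \<Sum>b2\<in>UNIV. \<Sum>c2\<in>UNIV.
     Del a (a1,a2) * Del b (b1,b2) * Del c (c1,c2) * Phi (bv a1) (bv b1) (bv c1) * Phiinv (bv a2) (bv b2) (bv c2))"
    by (rule swap6)
  also have "\<dots> = (\<Sum>a1\<in>UNIV. \<Sum>b1\<in>UNIV. \<Sum>c1\<in>UNIV. a a1 * b b1 * c c1 * Phi (bv a1) (bv b1) (bv c1) *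
     (\<Sum>a2\<in>UNIV. \<Sum>b2\<in>UNIV. \<Sum>c2\<in>UNIV. a a2 * b b2 * c c2 * Phiinv (bv a2) (bv b2) (bv c2)))"
    by (simp only: G_Del_pt a b c sum_distrib_left mult_ac)
  also have "\<dots> = (\<Sum>a1\<in>UNIV. \<Sum>b1\<in>UNIV. \<Sum>c1\<in>UNIV. a a1 * b b1 * c c1 * Phi (bv a1) (bv b1) (bv c1) * Phiinv a b c)"
    by (simp only: coll3[OF linPhiinv1 linPhiinv2 linPhiinv3])
  also have "\<dots> = (\<Sum>a1\<in>UNIV. \<Sum>b1\<in>UNIV. \<Sum>c1\<in>UNIV. a a1 * b b1 * c c1 * Phi (bv a1) (bv b1) (bv c1)) * Phiinv a b c"
    by (simp only: sum_distrib_right)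
  also have "\<dots> = Phi a b c * Phiinv a b c" by (simp only: coll3[OF linPhi1 linPhi2 linPhi3])
  finally show ?thesis by simp
qed

lemma Phi_nz: "a \<in> G \<Longrightarrow> b \<in> G \<Longrightarrow> c \<in> G \<Longrightarrow> Phi a b c \<noteq> 0"
  using Phi_inv_G by fastforce

lemma cocycle_G: assumes x: "x \<in> G" and y: "y \<in> G" and z: "z \<in> G" and w: "w \<in> G"
  shows "Phi x y (mul z w) * Phi (mul x y) z w = Phi y z w * Phi x (mul y z) w * Phi x y z"
proof -
  have lA1: "\<And>q r s. linear_fn (\<lambda>p. Phi p q (mul r s))" using linPhi1 .
  have lA2: "\<And>p r s. linear_fn (\<lambda>q. Phi p q (mul r s))" using linPhi2 .
  have lA3: "\<And>p q s. linear_fn (\<lambda>r. Phi p q (mul r s))" using linear_fn_comp[OF linPhi3 linMulL] .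
  have lA4: "\<And>p q r. linear_fn (\<lambda>s. Phi p q (mul r s))" using linear_fn_comp[OF linPhi3 linMulR] .
  have lB1: "\<And>q r s. linear_fn (\<lambda>p. Phi (mul p q) r s)" using linear_fn_comp[OF linPhi1 linMulL] .
  have lB2: "\<And>p r s. linear_fn (\<lambda>q. Phi (mul p q) r s)" using linear_fn_comp[OF linPhi1 linMulR] .
  have lB3: "\<And>p q s. linear_fn (\<lambda>r. Phi (mul p q) r s)" using linPhi2 .
  have lB4: "\<And>p q r. linear_fn (\<lambda>s. Phi (mul p q) r s)" using linPhi3 .
  have lC1: "\<And>q r s. linear_fn (\<lambda>p. Phi p (mul q r) s)" using linPhi1 .
  have lC2: "\<And>p r s. linear_fn (\<lambda>q. Phi p (mul q r) s)" using linear_fn_comp[OF linPhi2 linMulL] .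
  have lC3: "\<And>p q s. linear_fn (\<lambda>r. Phi p (mul q r) s)" using linear_fn_comp[OF linPhi2 linMulR] .
  have lC4: "\<And>p q r. linear_fn (\<lambda>s. Phi p (mul q r) s)" using linPhi3 .
  have L: "(\<Sum>a1\<in>UNIV. \<Sum>a2\<in>UNIV. \<Sum>b1\<in>UNIV. \<Sum>b2\<in>UNIV. \<Sum>c1\<in>UNIV. \<Sum>c2\<in>UNIV. \<Sum>d1\<in>UNIV. \<Sum>d2\<in>UNIV.
            Del x (a1,a2) * Del y (b1,b2) * Del z (c1,c2) * Del w (d1,d2)
            * Phi (bv a1) (bv b1) (mul (bv c1) (bv d1)) * Phi (mul (bv a2) (bv b2)) (bv c2) (bv d2))
        = Phi x y (mul z w) * Phi (mul x y) z w"
  proof -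
    have "(\<Sum>a1\<in>UNIV. \<Sum>a2\<in>UNIV. \<Sum>b1\<in>UNIV. \<Sum>b2\<in>UNIV. \<Sum>c1\<in>UNIV. \<Sum>c2\<in>UNIV. \<Sum>d1\<in>UNIV. \<Sum>d2\<in>UNIV.
            Del x (a1,a2) * Del y (b1,b2) * Del z (c1,c2) * Del w (d1,d2)
            * Phi (bv a1) (bv b1) (mul (bv c1) (bv d1)) * Phi (mul (bv a2) (bv b2)) (bv c2) (bv d2))
      = (\<Sum>a1\<in>UNIV. \<Sum>b1\<in>UNIV. \<Sum>c1\<in>UNIV. \<Sum>d1\<in>UNIV. \<Sum>a2\<in>UNIV. \<Sum>b2\<in>UNIV. \<Sum>c2\<in>UNIV. \<Sum>d2\<in>UNIV.
            Del x (a1,a2) * Del y (b1,b2) * Del z (c1,c2) * Del w (d1,d2)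
            * Phi (bv a1) (bv b1) (mul (bv c1) (bv d1)) * Phi (mul (bv a2) (bv b2)) (bv c2) (bv d2))"
      by (rule swap8)
    also have "\<dots> = (\<Sum>a1\<in>UNIV. \<Sum>b1\<in>UNIV. \<Sum>c1\<in>UNIV. \<Sum>d1\<in>UNIV. x a1 * y b1 * z c1 * w d1 * Phi (bv a1) (bv b1) (mul (bv c1) (bv d1)) *
          (\<Sum>a2\<in>UNIV. \<Sum>b2\<in>UNIV. \<Sum>c2\<in>UNIV. \<Sum>d2\<in>UNIV. x a2 * y b2 * z c2 * w d2 * Phi (mul (bv a2) (bv b2)) (bv c2) (bv d2)))"
      by (simp only: G_Del_pt x y z w sum_distrib_left mult_ac)
    also have "\<dots> = (\<Sum>a1\<in>UNIV. \<Sum>b1\<in>UNIV. \<Sum>c1\<in>UNIV. \<Sum>d1\<in>UNIV. x a1 * y b1 * z c1 * w d1 * Phi (bv a1) (bv b1) (mul (bv c1) (bv d1)) *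
          Phi (mul x y) z w)"
      by (simp only: coll4[OF lB1 lB2 lB3 lB4])
    also have "\<dots> = (\<Sum>a1\<in>UNIV. \<Sum>b1\<in>UNIV. \<Sum>c1\<in>UNIV. \<Sum>d1\<in>UNIV. x a1 * y b1 * z c1 * w d1 * Phi (bv a1) (bv b1) (mul (bv c1) (bv d1))) *
          Phi (mul x y) z w"
      by (simp only: sum_distrib_right)
    also have "\<dots> = Phi x y (mul z w) * Phi (mul x y) z w" by (simp only: coll4[OF lA1 lA2 lA3 lA4])
    finally show ?thesis .
  qed
  have R: "(\<Sum>a1\<in>UNIV. \<Sum>a2\<in>UNIV. \<Sum>b1\<in>UNIV. \<Sum>b2\<in>UNIV. \<Sum>b3\<in>UNIV. \<Sum>c1\<in>UNIV. \<Sum>c2\<in>UNIV. \<Sum>c3\<in>UNIV. \<Sum>d1\<in>UNIV. \<Sum>d2\<in>UNIV.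
            Del x (a1,a2) * D2 Del y b1 b2 b3 * D2 Del z c1 c2 c3 * Del w (d1,d2)
            * Phi (bv b1) (bv c1) (bv d1) * Phi (bv a1) (mul (bv b2) (bv c2)) (bv d2)
            * Phi (bv a2) (bv b3) (bv c3))
        = Phi y z w * Phi x (mul y z) w * Phi x y z"
  proof -
    have "(\<Sum>a1\<in>UNIV. \<Sum>a2\<in>UNIV. \<Sum>b1\<in>UNIV. \<Sum>b2\<in>UNIV. \<Sum>b3\<in>UNIV. \<Sum>c1\<in>UNIV. \<Sum>c2\<in>UNIV. \<Sum>c3\<in>UNIV. \<Sum>d1\<in>UNIV. \<Sum>d2\<in>UNIV.
            Del x (a1,a2) * D2 Del y b1 b2 b3 * D2 Del z c1 c2 c3 * Del w (d1,d2)
            * Phi (bv b1) (bv c1) (bv d1) * Phi (bv a1) (mul (bv b2) (bv c2)) (bv d2)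
            * Phi (bv a2) (bv b3) (bv c3))
      = (\<Sum>b1\<in>UNIV. \<Sum>c1\<in>UNIV. \<Sum>d1\<in>UNIV. \<Sum>a1\<in>UNIV. \<Sum>b2\<in>UNIV. \<Sum>c2\<in>UNIV. \<Sum>d2\<in>UNIV. \<Sum>a2\<in>UNIV. \<Sum>b3\<in>UNIV. \<Sum>c3\<in>UNIV.
            Del x (a1,a2) * D2 Del y b1 b2 b3 * D2 Del z c1 c2 c3 * Del w (d1,d2)
            * Phi (bv b1) (bv c1) (bv d1) * Phi (bv a1) (mul (bv b2) (bv c2)) (bv d2)
            * Phi (bv a2) (bv b3) (bv c3))"
      by (rule swap10)
    also have "\<dots> = (\<Sum>b1\<in>UNIV. \<Sum>c1\<in>UNIV. \<Sum>d1\<in>UNIV. y b1 * z c1 * w d1 * Phi (bv b1) (bv c1) (bv d1) *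
         (\<Sum>a1\<in>UNIV. \<Sum>b2\<in>UNIV. \<Sum>c2\<in>UNIV. \<Sum>d2\<in>UNIV. x a1 * y b2 * z c2 * w d2 * Phi (bv a1) (mul (bv b2) (bv c2)) (bv d2) *
         (\<Sum>a2\<in>UNIV. \<Sum>b3\<in>UNIV. \<Sum>c3\<in>UNIV. x a2 * y b3 * z c3 * Phi (bv a2) (bv b3) (bv c3))))"
      by (simp only: G_Del_pt D2_G x y z w sum_distrib_left mult_ac)
    also have "\<dots> = (\<Sum>b1\<in>UNIV. \<Sum>c1\<in>UNIV. \<Sum>d1\<in>UNIV. y b1 * z c1 * w d1 * Phi (bv b1) (bv c1) (bv d1) *
         ((\<Sum>a1\<in>UNIV. \<Sum>b2\<in>UNIV. \<Sum>c2\<in>UNIV. \<Sum>d2\<in>UNIV. x a1 * y b2 * z c2 * w d2 * Phi (bv a1) (mul (bv b2) (bv c2)) (bv d2)) *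
         Phi x y z))"
      by (simp only: coll3[OF linPhi1 linPhi2 linPhi3] sum_distrib_right)
    also have "\<dots> = (\<Sum>b1\<in>UNIV. \<Sum>c1\<in>UNIV. \<Sum>d1\<in>UNIV. y b1 * z c1 * w d1 * Phi (bv b1) (bv c1) (bv d1)) * (Phi x (mul y z) w * Phi x y z)"
      by (simp only: coll4[OF lC1 lC2 lC3 lC4] sum_distrib_right)
    also have "\<dots> = Phi y z w * Phi x (mul y z) w * Phi x y z"
      by (subst coll3[OF linPhi1 linPhi2 linPhi3]) (simp only: mult_ac)
    finally show ?thesis .
  qed
  show ?thesis using cocyc[of x y z w] L R by (simp only: sum_pair sum_pair3)
qed

end

definition va :: "int\<times>int\<times>int \<Rightarrow> int\<times>int\<times>int \<Rightarrow> int\<times>int\<times>int" where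
  "va x y = (fst x + fst y, fst (snd x) + fst (snd y), snd (snd x) + snd (snd y))"

lemma cancel2: "x \<noteq> 0 \<Longrightarrow> y \<noteq> 0 \<Longrightarrow> a * x * y = b * y * x \<Longrightarrow> a = (b::'k::field)"
  by (simp add: mult.commute mult.left_commute)

lemma mc: "a = b \<Longrightarrow> c = d \<Longrightarrow> a * c = b * (d::'a::times)" by simp

lemma psi_id:
  fixes \<psi> :: "int\<times>int\<times>int \<Rightarrow> int\<times>int\<times>int \<Rightarrow> int\<times>int\<times>int \<Rightarrow> 'k::field"
  assumes coc: "\<And>x y z u. \<psi> x y (va z u) * \<psi> (va x y) z u = \<psi> y z u * \<psi> x (va y z) u * \<psi> x y z"
    and nz: "\<And>x y z. \<psi> x y z \<noteq> 0"
    and n1: "\<And>x y. \<psi> x (0,0,0) y = 1" and n2: "\<And>x y. \<psi> x y (0,0,0) = 1" and n3: "\<And>x y. \<psi> (0,0,0) x y = 1"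
  shows "(\<psi> (1,0,1) (- 1,0,0) (1,0,0) * \<psi> (0,1,1) (0,- 1,0) (0,1,0) * \<psi> (1,0,0) (0,1,1) (0,- 1,0) * \<psi> (1,0,0) (0,1,0) (0,0,1) * \<psi> (1,1,0) (0,- 1,0) (- 1,0,0)) / (\<psi> (1,0,0) (- 1,0,0) (1,0,0) * \<psi> (0,1,0) (0,- 1,0) (0,1,0) * \<psi> (1,0,0) (0,1,0) (0,- 1,0) * \<psi> (1,1,1) (0,- 1,0) (- 1,0,0)) = (\<psi> (0,0,1) (1,0,0) (0,1,0) * \<psi> (1,0,0) (0,1,0) (0,0,1) * \<psi> (1,1,1) (- 1,- 1,0) (1,1,0)) / (\<psi> (1,0,0) (0,0,1) (0,1,0) * \<psi> (1,1,0) (- 1,- 1,0) (1,1,0))"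
proof -
  have h0: "\<psi> (- 1,- 1,0) (0,0,1) (1,1,0) * \<psi> (- 1,- 1,1) (1,0,0) (0,1,0) = \<psi> (0,0,1) (1,0,0) (0,1,0) * \<psi> (- 1,- 1,0) (1,0,1) (0,1,0) * \<psi> (- 1,- 1,0) (0,0,1) (1,0,0)"
    using coc[of "(- 1,- 1,0)" "(0,0,1)" "(1,0,0)" "(0,1,0)"] by (simp add: va_def n1 n2 n3 mult_ac)
  have h1: "\<psi> (- 1,0,1) (0,- 1,0) (0,1,0) = \<psi> (0,1,1) (0,- 1,0) (0,1,0) * \<psi> (- 1,- 1,0) (0,0,1) (0,1,0) * \<psi> (- 1,- 1,0) (0,1,1) (0,- 1,0)"
    using coc[of "(- 1,- 1,0)" "(0,1,1)" "(0,- 1,0)" "(0,1,0)"] by (simp add: va_def n1 n2 n3 mult_ac)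
  have h2: "\<psi> (- 1,- 1,0) (1,0,0) (0,1,1) * \<psi> (0,- 1,0) (0,0,1) (0,1,0) = \<psi> (1,0,0) (0,0,1) (0,1,0) * \<psi> (- 1,- 1,0) (1,0,1) (0,1,0) * \<psi> (- 1,- 1,0) (1,0,0) (0,0,1)"
    using coc[of "(- 1,- 1,0)" "(1,0,0)" "(0,0,1)" "(0,1,0)"] by (simp add: va_def n1 n2 n3 mult_ac)
  have h3: "\<psi> (- 1,- 1,0) (1,0,0) (0,0,1) * \<psi> (0,- 1,0) (0,1,1) (0,- 1,0) = \<psi> (1,0,0) (0,1,1) (0,- 1,0) * \<psi> (- 1,- 1,0) (1,1,1) (0,- 1,0) * \<psi> (- 1,- 1,0) (1,0,0) (0,1,1)"
    using coc[of "(- 1,- 1,0)" "(1,0,0)" "(0,1,1)" "(0,- 1,0)"] by (simp add: va_def n1 n2 n3 mult_ac)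
  have h4: "\<psi> (0,- 1,1) (- 1,0,0) (1,0,0) = \<psi> (1,0,1) (- 1,0,0) (1,0,0) * \<psi> (- 1,- 1,0) (0,0,1) (1,0,0) * \<psi> (- 1,- 1,0) (1,0,1) (- 1,0,0)"
    using coc[of "(- 1,- 1,0)" "(1,0,1)" "(- 1,0,0)" "(1,0,0)"] by (simp add: va_def n1 n2 n3 mult_ac)
  have h5: "\<psi> (0,0,1) (- 1,- 1,0) (1,1,0) = \<psi> (1,1,1) (- 1,- 1,0) (1,1,0) * \<psi> (- 1,- 1,0) (0,0,1) (1,1,0) * \<psi> (- 1,- 1,0) (1,1,1) (- 1,- 1,0)"
    using coc[of "(- 1,- 1,0)" "(1,1,1)" "(- 1,- 1,0)" "(1,1,0)"] by (simp add: va_def n1 n2 n3 mult_ac)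
  have h6: "\<psi> (- 1,- 1,0) (1,1,1) (- 1,- 1,0) * \<psi> (0,0,1) (0,- 1,0) (- 1,0,0) = \<psi> (1,1,1) (0,- 1,0) (- 1,0,0) * \<psi> (- 1,- 1,0) (1,0,1) (- 1,0,0) * \<psi> (- 1,- 1,0) (1,1,1) (0,- 1,0)"
    using coc[of "(- 1,- 1,0)" "(1,1,1)" "(0,- 1,0)" "(- 1,0,0)"] by (simp add: va_def n1 n2 n3 mult_ac)
  have h7: "\<psi> (- 1,0,1) (0,- 1,0) (0,1,0) = \<psi> (0,1,0) (0,- 1,0) (0,1,0) * \<psi> (- 1,- 1,1) (0,1,0) (0,- 1,0)"
    using coc[of "(- 1,- 1,1)" "(0,1,0)" "(0,- 1,0)" "(0,1,0)"] by (simp add: va_def n1 n2 n3 mult_ac)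
  have h8: "\<psi> (0,- 1,1) (- 1,0,0) (1,0,0) = \<psi> (1,0,0) (- 1,0,0) (1,0,0) * \<psi> (- 1,- 1,1) (1,0,0) (- 1,0,0)"
    using coc[of "(- 1,- 1,1)" "(1,0,0)" "(- 1,0,0)" "(1,0,0)"] by (simp add: va_def n1 n2 n3 mult_ac)
  have h9: "\<psi> (0,- 1,1) (0,1,0) (0,- 1,0) = \<psi> (1,0,0) (0,1,0) (0,- 1,0) * \<psi> (- 1,- 1,1) (1,1,0) (0,- 1,0) * \<psi> (- 1,- 1,1) (1,0,0) (0,1,0)"
    using coc[of "(- 1,- 1,1)" "(1,0,0)" "(0,1,0)" "(0,- 1,0)"] by (simp add: va_def n1 n2 n3 mult_ac)
  have h10: "\<psi> (0,0,1) (- 1,- 1,0) (1,1,0) = \<psi> (1,1,0) (- 1,- 1,0) (1,1,0) * \<psi> (- 1,- 1,1) (1,1,0) (- 1,- 1,0)"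
    using coc[of "(- 1,- 1,1)" "(1,1,0)" "(- 1,- 1,0)" "(1,1,0)"] by (simp add: va_def n1 n2 n3 mult_ac)
  have h11: "\<psi> (- 1,- 1,1) (1,1,0) (- 1,- 1,0) * \<psi> (0,0,1) (0,- 1,0) (- 1,0,0) = \<psi> (1,1,0) (0,- 1,0) (- 1,0,0) * \<psi> (- 1,- 1,1) (1,0,0) (- 1,0,0) * \<psi> (- 1,- 1,1) (1,1,0) (0,- 1,0)"
    using coc[of "(- 1,- 1,1)" "(1,1,0)" "(0,- 1,0)" "(- 1,0,0)"] by (simp add: va_def n1 n2 n3 mult_ac)
  have h12: "\<psi> (- 1,0,0) (0,- 1,0) (0,1,1) * \<psi> (- 1,- 1,0) (0,0,1) (0,1,0) = \<psi> (0,- 1,0) (0,0,1) (0,1,0) * \<psi> (- 1,0,0) (0,- 1,1) (0,1,0) * \<psi> (- 1,0,0) (0,- 1,0) (0,0,1)"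
    using coc[of "(- 1,0,0)" "(0,- 1,0)" "(0,0,1)" "(0,1,0)"] by (simp add: va_def n1 n2 n3 mult_ac)
  have h13: "\<psi> (- 1,0,0) (0,- 1,0) (0,0,1) * \<psi> (- 1,- 1,0) (0,1,1) (0,- 1,0) = \<psi> (0,- 1,0) (0,1,1) (0,- 1,0) * \<psi> (- 1,0,0) (0,0,1) (0,- 1,0) * \<psi> (- 1,0,0) (0,- 1,0) (0,1,1)"
    using coc[of "(- 1,0,0)" "(0,- 1,0)" "(0,1,1)" "(0,- 1,0)"] by (simp add: va_def n1 n2 n3 mult_ac)
  have h14: "\<psi> (- 1,- 1,1) (0,1,0) (0,- 1,0) = \<psi> (0,- 1,1) (0,1,0) (0,- 1,0) * \<psi> (- 1,0,0) (0,0,1) (0,- 1,0) * \<psi> (- 1,0,0) (0,- 1,1) (0,1,0)"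
    using coc[of "(- 1,0,0)" "(0,- 1,1)" "(0,1,0)" "(0,- 1,0)"] by (simp add: va_def n1 n2 n3 mult_ac)
  have hp: "((\<psi> (- 1,0,1) (0,- 1,0) (0,1,0)) * (\<psi> (- 1,- 1,0) (1,0,0) (0,1,1) * \<psi> (0,- 1,0) (0,0,1) (0,1,0)) * (\<psi> (- 1,- 1,0) (1,0,0) (0,0,1) * \<psi> (0,- 1,0) (0,1,1) (0,- 1,0)) * (\<psi> (0,- 1,1) (- 1,0,0) (1,0,0)) * (\<psi> (0,0,1) (- 1,- 1,0) (1,1,0)) * (\<psi> (- 1,- 1,1) (1,1,0) (- 1,- 1,0) * \<psi> (0,0,1) (0,- 1,0) (- 1,0,0)) * (\<psi> (- 1,0,0) (0,- 1,0) (0,1,1) * \<psi> (- 1,- 1,0) (0,0,1) (0,1,0)) * (\<psi> (- 1,0,0) (0,- 1,0) (0,0,1) * \<psi> (- 1,- 1,0) (0,1,1) (0,- 1,0))) = ((\<psi> (0,1,1) (0,- 1,0) (0,1,0) * \<psi> (- 1,- 1,0) (0,0,1) (0,1,0) * \<psi> (- 1,- 1,0) (0,1,1) (0,- 1,0)) * (\<psi> (1,0,0) (0,0,1) (0,1,0) * \<psi> (- 1,- 1,0) (1,0,1) (0,1,0) * \<psi> (- 1,- 1,0) (1,0,0) (0,0,1)) * (\<psi> (1,0,0) (0,1,1) (0,- 1,0) * \<psi> (- 1,- 1,0) (1,1,1) (0,- 1,0) * \<psi> (- 1,- 1,0) (1,0,0) (0,1,1)) * (\<psi> (1,0,1) (-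 1,0,0) (1,0,0) * \<psi> (- 1,- 1,0) (0,0,1) (1,0,0) * \<psi> (- 1,- 1,0) (1,0,1) (- 1,0,0)) * (\<psi> (1,1,0) (- 1,- 1,0) (1,1,0) * \<psi> (- 1,- 1,1) (1,1,0) (- 1,- 1,0)) * (\<psi> (1,1,0) (0,- 1,0) (- 1,0,0) * \<psi> (- 1,- 1,1) (1,0,0) (- 1,0,0) * \<psi> (- 1,- 1,1) (1,1,0) (0,- 1,0)) * (\<psi> (0,- 1,0) (0,0,1) (0,1,0) * \<psi> (- 1,0,0) (0,- 1,1) (0,1,0) * \<psi> (- 1,0,0) (0,- 1,0) (0,0,1)) * (\<psi> (0,- 1,0) (0,1,1) (0,- 1,0) * \<psi> (- 1,0,0) (0,0,1) (0,- 1,0) * \<psi> (- 1,0,0) (0,- 1,0) (0,1,1)))" by (rule mc[OF mc[OF mc[OF mc[OF mc[OF mc[OF mc[OF h1 h2] h3] h4] h10] h11] h12] h13])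
  have hm: "((\<psi> (- 1,- 1,0) (0,0,1) (1,1,0) * \<psi> (- 1,- 1,1) (1,0,0) (0,1,0)) * (\<psi> (0,0,1) (- 1,- 1,0) (1,1,0)) * (\<psi> (- 1,- 1,0) (1,1,1) (- 1,- 1,0) * \<psi> (0,0,1) (0,- 1,0) (- 1,0,0)) * (\<psi> (- 1,0,1) (0,- 1,0) (0,1,0)) * (\<psi> (0,- 1,1) (- 1,0,0) (1,0,0)) * (\<psi> (0,- 1,1) (0,1,0) (0,- 1,0)) * (\<psi> (- 1,- 1,1) (0,1,0) (0,- 1,0))) = ((\<psi> (0,0,1) (1,0,0) (0,1,0) * \<psi> (- 1,- 1,0) (1,0,1) (0,1,0) * \<psi> (- 1,- 1,0) (0,0,1) (1,0,0)) * (\<psi> (1,1,1) (- 1,- 1,0) (1,1,0) * \<psi> (- 1,- 1,0) (0,0,1) (1,1,0) * \<psi> (- 1,- 1,0) (1,1,1) (- 1,- 1,0)) * (\<psi> (1,1,1) (0,- 1,0) (- 1,0,0) * \<psi> (- 1,- 1,0) (1,0,1) (- 1,0,0) * \<psi> (- 1,- 1,0) (1,1,1) (0,- 1,0)) * (\<psi> (0,1,0) (0,- 1,0) (0,1,0) * \<psi> (- 1,- 1,1) (0,1,0) (0,- 1,0)) * (\<psi> (1,0,0) (- 1,0,0) (1,0,0) * \<psi> (- 1,- 1,1) (1,0,0) (- 1,0,0)) * (\<psi> (1,0,0) (0,1,0) (0,- 1,0) * \<psi> (- 1,- 1,1) (1,1,0) (0,- 1,0) * \<psi> (- 1,- 1,1)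 (1,0,0) (0,1,0)) * (\<psi> (0,- 1,1) (0,1,0) (0,- 1,0) * \<psi> (- 1,0,0) (0,0,1) (0,- 1,0) * \<psi> (- 1,0,0) (0,- 1,1) (0,1,0)))" by (rule mc[OF mc[OF mc[OF mc[OF mc[OF mc[OF h0 h5] h6] h7] h8] h9] h14])
  have M: "(\<psi> (1,0,1) (- 1,0,0) (1,0,0) * \<psi> (0,1,1) (0,- 1,0) (0,1,0) * \<psi> (1,0,0) (0,1,1) (0,- 1,0) * \<psi> (1,0,0) (0,1,0) (0,0,1) * \<psi> (1,1,0) (0,- 1,0) (- 1,0,0)) * (\<psi> (1,0,0) (0,0,1) (0,1,0) * \<psi> (1,1,0) (- 1,- 1,0) (1,1,0)) * ((\<psi> (0,0,1) (1,0,0) (0,1,0) * \<psi> (- 1,- 1,0) (1,0,1) (0,1,0) * \<psi> (- 1,- 1,0) (0,0,1) (1,0,0)) * (\<psi> (1,1,1) (- 1,- 1,0) (1,1,0) * \<psi> (- 1,- 1,0) (0,0,1) (1,1,0) * \<psi> (- 1,- 1,0) (1,1,1) (- 1,- 1,0)) * (\<psi> (1,1,1) (0,- 1,0) (- 1,0,0) * \<psi> (- 1,- 1,0) (1,0,1) (- 1,0,0) * \<psi> (- 1,- 1,0) (1,1,1) (0,- 1,0)) * (\<psi> (0,1,0) (0,- 1,0) (0,1,0) * \<psi> (- 1,- 1,1) (0,1,0) (0,- 1,0)) * (\<psi> (1,0,0) (- 1,0,0) (1,0,0) * \<psi> (- 1,- 1,1) (1,0,0) (- 1,0,0)) * (\<psi>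 (1,0,0) (0,1,0) (0,- 1,0) * \<psi> (- 1,- 1,1) (1,1,0) (0,- 1,0) * \<psi> (- 1,- 1,1) (1,0,0) (0,1,0)) * (\<psi> (0,- 1,1) (0,1,0) (0,- 1,0) * \<psi> (- 1,0,0) (0,0,1) (0,- 1,0) * \<psi> (- 1,0,0) (0,- 1,1) (0,1,0))) * ((\<psi> (- 1,0,1) (0,- 1,0) (0,1,0)) * (\<psi> (- 1,- 1,0) (1,0,0) (0,1,1) * \<psi> (0,- 1,0) (0,0,1) (0,1,0)) * (\<psi> (- 1,- 1,0) (1,0,0) (0,0,1) * \<psi> (0,- 1,0) (0,1,1) (0,- 1,0)) * (\<psi> (0,- 1,1) (- 1,0,0) (1,0,0)) * (\<psi> (0,0,1) (- 1,- 1,0) (1,1,0)) * (\<psi> (- 1,- 1,1) (1,1,0) (- 1,- 1,0) * \<psi> (0,0,1) (0,- 1,0) (- 1,0,0)) * (\<psi> (- 1,0,0) (0,- 1,0) (0,1,1) * \<psi> (- 1,- 1,0) (0,0,1) (0,1,0)) * (\<psi> (- 1,0,0) (0,- 1,0) (0,0,1) * \<psi> (- 1,- 1,0) (0,1,1) (0,- 1,0))) = (\<psi> (1,0,0) (- 1,0,0) (1,0,0) * \<psi> (0,1,0) (0,- 1,0) (0,1,0) * \<psi> (1,0,0) (0,1,0) (0,- 1,0) * \<psi> (1,1,1) (0,- 1,0) (- 1,0,0)) * (\<psi> (0,0,1) (1,0,0) (0,1,0) * \<psi> (1,0,0) (0,1,0) (0,0,1) * \<psi> (1,1,1) (- 1,-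 1,0) (1,1,0)) * ((\<psi> (0,1,1) (0,- 1,0) (0,1,0) * \<psi> (- 1,- 1,0) (0,0,1) (0,1,0) * \<psi> (- 1,- 1,0) (0,1,1) (0,- 1,0)) * (\<psi> (1,0,0) (0,0,1) (0,1,0) * \<psi> (- 1,- 1,0) (1,0,1) (0,1,0) * \<psi> (- 1,- 1,0) (1,0,0) (0,0,1)) * (\<psi> (1,0,0) (0,1,1) (0,- 1,0) * \<psi> (- 1,- 1,0) (1,1,1) (0,- 1,0) * \<psi> (- 1,- 1,0) (1,0,0) (0,1,1)) * (\<psi> (1,0,1) (- 1,0,0) (1,0,0) * \<psi> (- 1,- 1,0) (0,0,1) (1,0,0) * \<psi> (- 1,- 1,0) (1,0,1) (- 1,0,0)) * (\<psi> (1,1,0) (- 1,- 1,0) (1,1,0) * \<psi> (- 1,- 1,1) (1,1,0) (- 1,- 1,0)) * (\<psi> (1,1,0) (0,- 1,0) (- 1,0,0) * \<psi> (- 1,- 1,1) (1,0,0) (- 1,0,0) * \<psi> (- 1,- 1,1) (1,1,0) (0,- 1,0)) * (\<psi> (0,- 1,0) (0,0,1) (0,1,0) * \<psi> (- 1,0,0) (0,- 1,1) (0,1,0) * \<psi> (- 1,0,0) (0,- 1,0) (0,0,1)) * (\<psi> (0,- 1,0) (0,1,1) (0,- 1,0) * \<psi> (- 1,0,0) (0,0,1) (0,- 1,0) * \<psi> (- 1,0,0) (0,- 1,0) (0,1,1))) * ((\<psi> (- 1,- 1,0) (0,0,1) (1,1,0) * \<psi> (- 1,- 1,1) (1,0,0)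 (0,1,0)) * (\<psi> (0,0,1) (- 1,- 1,0) (1,1,0)) * (\<psi> (- 1,- 1,0) (1,1,1) (- 1,- 1,0) * \<psi> (0,0,1) (0,- 1,0) (- 1,0,0)) * (\<psi> (- 1,0,1) (0,- 1,0) (0,1,0)) * (\<psi> (0,- 1,1) (- 1,0,0) (1,0,0)) * (\<psi> (0,- 1,1) (0,1,0) (0,- 1,0)) * (\<psi> (- 1,- 1,1) (0,1,0) (0,- 1,0)))"
    by (simp only: mult_ac)
  have M2: "(\<psi> (1,0,1) (- 1,0,0) (1,0,0) * \<psi> (0,1,1) (0,- 1,0) (0,1,0) * \<psi> (1,0,0) (0,1,1) (0,- 1,0) * \<psi> (1,0,0) (0,1,0) (0,0,1) * \<psi> (1,1,0) (0,- 1,0) (- 1,0,0)) * (\<psi> (1,0,0) (0,0,1) (0,1,0) * \<psi> (1,1,0) (- 1,- 1,0) (1,1,0)) * ((\<psi> (0,0,1) (1,0,0) (0,1,0) * \<psi> (- 1,- 1,0) (1,0,1) (0,1,0) * \<psi> (- 1,- 1,0) (0,0,1) (1,0,0)) * (\<psi> (1,1,1) (- 1,- 1,0) (1,1,0) * \<psi> (- 1,- 1,0) (0,0,1) (1,1,0) * \<psi> (- 1,- 1,0) (1,1,1) (- 1,- 1,0)) * (\<psi> (1,1,1) (0,- 1,0) (- 1,0,0) * \<psi> (- 1,- 1,0) (1,0,1) (- 1,0,0) * \<psi> (- 1,- 1,0) (1,1,1) (0,- 1,0)) * (\<psi> (0,1,0) (0,- 1,0) (0,1,0) * \<psi> (-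 1,- 1,1) (0,1,0) (0,- 1,0)) * (\<psi> (1,0,0) (- 1,0,0) (1,0,0) * \<psi> (- 1,- 1,1) (1,0,0) (- 1,0,0)) * (\<psi> (1,0,0) (0,1,0) (0,- 1,0) * \<psi> (- 1,- 1,1) (1,1,0) (0,- 1,0) * \<psi> (- 1,- 1,1) (1,0,0) (0,1,0)) * (\<psi> (0,- 1,1) (0,1,0) (0,- 1,0) * \<psi> (- 1,0,0) (0,0,1) (0,- 1,0) * \<psi> (- 1,0,0) (0,- 1,1) (0,1,0))) * ((\<psi> (0,1,1) (0,- 1,0) (0,1,0) * \<psi> (- 1,- 1,0) (0,0,1) (0,1,0) * \<psi> (- 1,- 1,0) (0,1,1) (0,- 1,0)) * (\<psi> (1,0,0) (0,0,1) (0,1,0) * \<psi> (- 1,- 1,0) (1,0,1) (0,1,0) * \<psi> (- 1,- 1,0) (1,0,0) (0,0,1)) * (\<psi> (1,0,0) (0,1,1) (0,- 1,0) * \<psi> (- 1,- 1,0) (1,1,1) (0,- 1,0) * \<psi> (- 1,- 1,0) (1,0,0) (0,1,1)) * (\<psi> (1,0,1) (- 1,0,0) (1,0,0) * \<psi> (- 1,- 1,0) (0,0,1) (1,0,0) * \<psi> (- 1,- 1,0) (1,0,1) (- 1,0,0)) * (\<psi> (1,1,0) (- 1,- 1,0) (1,1,0) * \<psi> (- 1,- 1,1) (1,1,0) (- 1,- 1,0)) * (\<psi> (1,1,0) (0,- 1,0) (- 1,0,0) * \<psi> (- 1,- 1,1) (1,0,0) (- 1,0,0) * \<psi> (- 1,-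 1,1) (1,1,0) (0,- 1,0)) * (\<psi> (0,- 1,0) (0,0,1) (0,1,0) * \<psi> (- 1,0,0) (0,- 1,1) (0,1,0) * \<psi> (- 1,0,0) (0,- 1,0) (0,0,1)) * (\<psi> (0,- 1,0) (0,1,1) (0,- 1,0) * \<psi> (- 1,0,0) (0,0,1) (0,- 1,0) * \<psi> (- 1,0,0) (0,- 1,0) (0,1,1))) = (\<psi> (1,0,0) (- 1,0,0) (1,0,0) * \<psi> (0,1,0) (0,- 1,0) (0,1,0) * \<psi> (1,0,0) (0,1,0) (0,- 1,0) * \<psi> (1,1,1) (0,- 1,0) (- 1,0,0)) * (\<psi> (0,0,1) (1,0,0) (0,1,0) * \<psi> (1,0,0) (0,1,0) (0,0,1) * \<psi> (1,1,1) (- 1,- 1,0) (1,1,0)) * ((\<psi> (0,1,1) (0,- 1,0) (0,1,0) * \<psi> (- 1,- 1,0) (0,0,1) (0,1,0) * \<psi> (- 1,- 1,0) (0,1,1) (0,- 1,0)) * (\<psi> (1,0,0) (0,0,1) (0,1,0) * \<psi> (- 1,- 1,0) (1,0,1) (0,1,0) * \<psi> (- 1,- 1,0) (1,0,0) (0,0,1)) * (\<psi> (1,0,0) (0,1,1) (0,- 1,0) * \<psi> (- 1,- 1,0) (1,1,1) (0,- 1,0) * \<psi> (- 1,- 1,0) (1,0,0) (0,1,1)) * (\<psi> (1,0,1) (- 1,0,0) (1,0,0) * \<psi> (- 1,- 1,0) (0,0,1) (1,0,0) * \<psi> (- 1,- 1,0) (1,0,1) (- 1,0,0)) * (\<psi>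 (1,1,0) (- 1,- 1,0) (1,1,0) * \<psi> (- 1,- 1,1) (1,1,0) (- 1,- 1,0)) * (\<psi> (1,1,0) (0,- 1,0) (- 1,0,0) * \<psi> (- 1,- 1,1) (1,0,0) (- 1,0,0) * \<psi> (- 1,- 1,1) (1,1,0) (0,- 1,0)) * (\<psi> (0,- 1,0) (0,0,1) (0,1,0) * \<psi> (- 1,0,0) (0,- 1,1) (0,1,0) * \<psi> (- 1,0,0) (0,- 1,0) (0,0,1)) * (\<psi> (0,- 1,0) (0,1,1) (0,- 1,0) * \<psi> (- 1,0,0) (0,0,1) (0,- 1,0) * \<psi> (- 1,0,0) (0,- 1,0) (0,1,1))) * ((\<psi> (0,0,1) (1,0,0) (0,1,0) * \<psi> (- 1,- 1,0) (1,0,1) (0,1,0) * \<psi> (- 1,- 1,0) (0,0,1) (1,0,0)) * (\<psi> (1,1,1) (- 1,- 1,0) (1,1,0) * \<psi> (- 1,- 1,0) (0,0,1) (1,1,0) * \<psi> (- 1,- 1,0) (1,1,1) (- 1,- 1,0)) * (\<psi> (1,1,1) (0,- 1,0) (- 1,0,0) * \<psi> (- 1,- 1,0) (1,0,1) (- 1,0,0) * \<psi> (- 1,- 1,0) (1,1,1) (0,- 1,0)) * (\<psi> (0,1,0) (0,- 1,0) (0,1,0) * \<psi> (- 1,- 1,1) (0,1,0) (0,- 1,0)) * (\<psi> (1,0,0) (- 1,0,0) (1,0,0) * \<psi> (- 1,- 1,1) (1,0,0) (- 1,0,0)) * (\<psi> (1,0,0) (0,1,0) (0,- 1,0) * \<psi>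 (- 1,- 1,1) (1,1,0) (0,- 1,0) * \<psi> (- 1,- 1,1) (1,0,0) (0,1,0)) * (\<psi> (0,- 1,1) (0,1,0) (0,- 1,0) * \<psi> (- 1,0,0) (0,0,1) (0,- 1,0) * \<psi> (- 1,0,0) (0,- 1,1) (0,1,0)))"
    using M unfolding hp hm .
  have M3: "(\<psi> (1,0,1) (- 1,0,0) (1,0,0) * \<psi> (0,1,1) (0,- 1,0) (0,1,0) * \<psi> (1,0,0) (0,1,1) (0,- 1,0) * \<psi> (1,0,0) (0,1,0) (0,0,1) * \<psi> (1,1,0) (0,- 1,0) (- 1,0,0)) * (\<psi> (1,0,0) (0,0,1) (0,1,0) * \<psi> (1,1,0) (- 1,- 1,0) (1,1,0)) = (\<psi> (1,0,0) (- 1,0,0) (1,0,0) * \<psi> (0,1,0) (0,- 1,0) (0,1,0) * \<psi> (1,0,0) (0,1,0) (0,- 1,0) * \<psi> (1,1,1) (0,- 1,0) (- 1,0,0)) * (\<psi> (0,0,1) (1,0,0) (0,1,0) * \<psi> (1,0,0) (0,1,0) (0,0,1) * \<psi> (1,1,1) (- 1,- 1,0) (1,1,0))"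
    by (rule cancel2[OF _ _ M2]) (simp_all add: nz)
  show ?thesis using M3 by (simp add: frac_eq_eq nz mult_ac)
qed

lemma grp_scalar:
  fixes Gr (structure) and \<phi> :: "'a \<Rightarrow> 'a \<Rightarrow> 'a \<Rightarrow> 'k::field"
  assumes cg: "comm_group Gr" and e: "e \<in> carrier Gr" and f: "f \<in> carrier Gr" and g: "g \<in> carrier Gr"
    and coc: "\<And>a b c d. a \<in> carrier Gr \<Longrightarrow> b \<in> carrier Gr \<Longrightarrow> c \<in> carrier Gr \<Longrightarrow> d \<in> carrier Gr \<Longrightarrow>
        \<phi> a b (c \<otimes> d) * \<phi> (a \<otimes> b) c d = \<phi> b c d * \<phi> a (b \<otimes> c) d * \<phi> a b c"
    and nz: "\<And>a b c. a \<in> carrier Gr \<Longrightarrow> b \<in> carrier Gr \<Longrightarrow> c \<in> carrier Gr \<Longrightarrow> \<phi> a b c \<noteq> 0"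
    and n1: "\<And>a b. a \<in> carrier Gr \<Longrightarrow> b \<in> carrier Gr \<Longrightarrow> \<phi> a \<one> b = 1"
    and n2: "\<And>a b. a \<in> carrier Gr \<Longrightarrow> b \<in> carrier Gr \<Longrightarrow> \<phi> a b \<one> = 1"
    and n3: "\<And>a b. a \<in> carrier Gr \<Longrightarrow> b \<in> carrier Gr \<Longrightarrow> \<phi> \<one> a b = 1"
  shows "(\<phi> (e \<otimes> g) (inv e) e * \<phi> (f \<otimes> g) (inv f) f * \<phi> e (f \<otimes> g) (inv f) * \<phi> e f g * \<phi> (e \<otimes> f) (inv f) (inv e))
       / (\<phi> e (inv e) e * \<phi> f (inv f) f * \<phi> e f (inv f) * \<phi> (e \<otimes> f \<otimes> g) (inv f) (inv e))
       = (\<phi> g e f * \<phi> e f g * \<phi> (e \<otimes> f \<otimes> g) (inv (e \<otimes> f)) (e \<otimes> f))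
       / (\<phi> e g f * \<phi> (e \<otimes> f) (inv (e \<otimes> f)) (e \<otimes> f))"
proof -
  interpret comm_group Gr by (rule cg)
  define w where "w x = e [^] (fst x) \<otimes> f [^] (fst (snd x)) \<otimes> g [^] (snd (snd x))" for x :: "int\<times>int\<times>int"
  have wc: "w x \<in> carrier Gr" for x unfolding w_def using e f g by simp
  have wva: "w (va x y) = w x \<otimes> w y" for x y
    unfolding w_def va_def using e f g by (simp add: int_pow_mult m_ac)
  have w0: "w (0,0,0) = \<one>" unfolding w_def using e f g by simp
  define \<psi> where "\<psi> x y z = \<phi> (w x) (w y) (w z)" for x y z
  have P: "(\<psi> (1,0,1) (- 1,0,0) (1,0,0) * \<psi> (0,1,1) (0,- 1,0) (0,1,0) * \<psi> (1,0,0) (0,1,1) (0,- 1,0) * \<psi> (1,0,0) (0,1,0) (0,0,1) * \<psi> (1,1,0) (0,- 1,0) (- 1,0,0)) / (\<psi> (1,0,0) (- 1,0,0) (1,0,0) * \<psi> (0,1,0) (0,- 1,0) (0,1,0) * \<psi> (1,0,0) (0,1,0) (0,- 1,0) * \<psi> (1,1,1) (0,- 1,0) (- 1,0,0)) = (\<psi> (0,0,1) (1,0,0) (0,1,0) * \<psi> (1,0,0) (0,1,0) (0,0,1) * \<psi> (1,1,1) (- 1,- 1,0) (1,1,0)) / (\<psi> (1,0,0) (0,0,1) (0,1,0) * \<psi> (1,1,0) (- 1,- 1,0) (1,1,0))"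
  proof (rule psi_id)
    fix x y z u show "\<psi> x y (va z u) * \<psi> (va x y) z u = \<psi> y z u * \<psi> x (va y z) u * \<psi> x y z"
      unfolding \<psi>_def wva by (rule coc[OF wc wc wc wc])
  next
    fix x y z show "\<psi> x y z \<noteq> 0" unfolding \<psi>_def by (rule nz[OF wc wc wc])
  next
    fix x y show "\<psi> x (0,0,0) y = 1" unfolding \<psi>_def w0 by (rule n1[OF wc wc])
  next
    fix x y show "\<psi> x y (0,0,0) = 1" unfolding \<psi>_def w0 by (rule n2[OF wc wc])
  next
    fix x y show "\<psi> (0,0,0) x y = 1" unfolding \<psi>_def w0 by (rule n3[OF wc wc])
  qed
  have w1: "w (1,0,0) = e" "w (0,1,0) = f" "w (0,0,1) = g" "w (1,0,1) = e \<otimes> g" "w (0,1,1) = f \<otimes> g"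
    "w (1,1,0) = e \<otimes> f" "w (1,1,1) = e \<otimes> f \<otimes> g" "w (- 1,0,0) = inv e" "w (0,- 1,0) = inv f"
    "w (- 1,- 1,0) = inv (e \<otimes> f)"
    unfolding w_def using e f g by (simp_all add: int_pow_neg inv_mult m_ac)
  show ?thesis using P unfolding \<psi>_def w1 .
qed


lemma swap4: "(\<Sum>a\<in>UNIV. \<Sum>a'\<in>UNIV. \<Sum>b\<in>UNIV. \<Sum>b'\<in>UNIV. f a a' b b')
  = (\<Sum>b\<in>UNIV. \<Sum>b'\<in>UNIV. \<Sum>a\<in>UNIV. \<Sum>a'\<in>UNIV. f a a' b b')"
  for f :: "'b::finite \<Rightarrow> 'b \<Rightarrow> 'b \<Rightarrow> 'b \<Rightarrow> 'k::comm_monoid_add"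
  apply (simp only: nest2)
  apply (rule sum.reindex_bij_witness[where i="\<lambda>(b,b',a,a'). (a,a',b,b')" and j="\<lambda>(a,a',b,b'). (b,b',a,a')"])
  apply auto
  done

lemma smul_cancel: "c \<noteq> 0 \<Longrightarrow> smul c x = smul c y \<Longrightarrow> x = (y::'a \<Rightarrow> 'k::field)"
proof (rule ext)
  fix i assume c: "c \<noteq> 0" and e: "smul c x = smul c y"
  have "c * x i = c * y i" using fun_cong[OF e, of i] by simp
  then show "x i = y i" using c by simp
qed

context LM begin

lemma P_col: "Y \<in> C h k \<Longrightarrow> P (\<lambda>i. Del Y (i,c)) = smul (Y c) h"
proof (rule ext)
  fix p assume Y: "Y \<in> C h k"
  have "P (\<lambda>i. Del Y (i,c)) p = tmap P id (Del Y) (p,c)" by (simp only: tmap_Pid_pt)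
  also have "\<dots> = h p * Y c" using Y unfolding C_def by simp
  finally show "P (\<lambda>i. Del Y (i,c)) p = smul (Y c) h p" by (simp add: mult.commute)
qed

lemma P_row: "Y \<in> C h k \<Longrightarrow> P (\<lambda>j. Del Y (c,j)) = smul (Y c) k"
proof (rule ext)
  fix q assume Y: "Y \<in> C h k"
  have "P (\<lambda>j. Del Y (c,j)) q = tmap id P (Del Y) (c,q)" by (simp only: tmap_idP_pt)
  also have "\<dots> = Y c * k q" using Y unfolding C_def by simp
  finally show "P (\<lambda>j. Del Y (c,j)) q = smul (Y c) k q" by simp
qed

lemma tmapPid_gen:
  assumes Y: "Y \<in> C h k" and lA: "linear_f A" and lB: "linear_f B" and PA: "\<And>v. P (A v) = A (P v)"
    and Z: "\<And>i j. Del Z (i,j) = (\<Sum>b\<in>UNIV. \<Sum>b'\<in>UNIV. Del Y (b,b') * (A (bv b) i * B (bv b') j))"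
  shows "tmap P id (Del Z) = tens2 (A h) (B Y)"
proof (rule ext, clarify)
  fix p q
  have col: "(\<lambda>i. Del Z (i,q)) = (\<Sum>b'\<in>UNIV. smul (B (bv b') q) (A (\<lambda>b. Del Y (b,b'))))"
  proof (rule ext)
    fix i
    have "Del Z (i,q) = (\<Sum>b'\<in>UNIV. \<Sum>b\<in>UNIV. Del Y (b,b') * (A (bv b) i * B (bv b') q))"
      by (simp only: Z, rule sum.swap)
    also have "\<dots> = (\<Sum>b'\<in>UNIV. B (bv b') q * (\<Sum>b\<in>UNIV. Del Y (b,b') * A (bv b) i))"
      by (simp only: sum_distrib_left mult_ac)
    also have "\<dots> = (\<Sum>b'\<in>UNIV. B (bv b') q * A (\<lambda>b. Del Y (b,b')) i)"
      by (simp only: lin_pt[OF lA])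
    finally show "Del Z (i,q) = (\<Sum>b'\<in>UNIV. smul (B (bv b') q) (A (\<lambda>b. Del Y (b,b')))) i"
      by (simp only: sum_apply smul_apply)
  qed
  have "tmap P id (Del Z) (p,q) = P (\<lambda>i. Del Z (i,q)) p" by (rule tmap_Pid_pt)
  also have "\<dots> = (\<Sum>b'\<in>UNIV. B (bv b') q * A (P (\<lambda>b. Del Y (b,b'))) p)"
    by (simp only: col linear_f_sum[OF linP] linear_f_smul[OF linP] PA sum_apply smul_apply)
  also have "\<dots> = (\<Sum>b'\<in>UNIV. Y b' * B (bv b') q) * A h p"
    by (simp only: P_col[OF Y] linear_f_smul[OF lA] smul_apply sum_distrib_right sum_distrib_left mult_ac)
  also have "\<dots> = tens2 (A h) (B Y) (p,q)" by (simp only: lin_pt[OF lB] tens2_apply mult.commute)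
  finally show "tmap P id (Del Z) (p,q) = tens2 (A h) (B Y) (p,q)" .
qed

lemma tmapidP_gen:
  assumes Y: "Y \<in> C h k" and lA: "linear_f A" and lB: "linear_f B" and PB: "\<And>v. P (B v) = B (P v)"
    and Z: "\<And>i j. Del Z (i,j) = (\<Sum>b\<in>UNIV. \<Sum>b'\<in>UNIV. Del Y (b,b') * (A (bv b) i * B (bv b') j))"
  shows "tmap id P (Del Z) = tens2 (A Y) (B k)"
proof (rule ext, clarify)
  fix p q
  have row: "(\<lambda>j. Del Z (p,j)) = (\<Sum>b\<in>UNIV. smul (A (bv b) p) (B (\<lambda>b'. Del Y (b,b'))))"
  proof (rule ext)
    fix j
    have "Del Z (p,j) = (\<Sum>b\<in>UNIV. A (bv b) p * (\<Sum>b'\<in>UNIV. Del Y (b,b') * B (bv b') j))"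
      by (simp only: Z sum_distrib_left mult_ac)
    also have "\<dots> = (\<Sum>b\<in>UNIV. A (bv b) p * B (\<lambda>b'. Del Y (b,b')) j)"
      by (simp only: lin_pt[OF lB])
    finally show "Del Z (p,j) = (\<Sum>b\<in>UNIV. smul (A (bv b) p) (B (\<lambda>b'. Del Y (b,b')))) j"
      by (simp only: sum_apply smul_apply)
  qed
  have "tmap id P (Del Z) (p,q) = P (\<lambda>j. Del Z (p,j)) q" by (rule tmap_idP_pt)
  also have "\<dots> = (\<Sum>b\<in>UNIV. A (bv b) p * B (P (\<lambda>b'. Del Y (b,b'))) q)"
    by (simp only: row linear_f_sum[OF linP] linear_f_smul[OF linP] PB sum_apply smul_apply)
  also have "\<dots> = (\<Sum>b\<in>UNIV. Y b * A (bv b) p) * B k q"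
    by (simp only: P_row[OF Y] linear_f_smul[OF lB] smul_apply sum_distrib_right sum_distrib_left mult_ac)
  also have "\<dots> = tens2 (A Y) (B k) (p,q)" by (simp only: lin_pt[OF lA] tens2_apply)
  finally show "tmap id P (Del Z) (p,q) = tens2 (A Y) (B k) (p,q)" .
qed

lemma Del_mulL: assumes f: "f \<in> G"
  shows "Del (mul f Y) (i,j) = (\<Sum>b\<in>UNIV. \<Sum>b'\<in>UNIV. Del Y (b,b') * (mul f (bv b) i * mul f (bv b') j))"
proof -
  have "Del (mul f Y) (i,j) = (\<Sum>a\<in>UNIV. \<Sum>a'\<in>UNIV. \<Sum>b\<in>UNIV. \<Sum>b'\<in>UNIV. f a * f a' * Del Y (b,b') * mul (bv a) (bv b) i * mul (bv a') (bv b') j)"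
    by (simp only: mulDel sum_pair G_Del_pt[OF f])
  also have "\<dots> = (\<Sum>b\<in>UNIV. \<Sum>b'\<in>UNIV. \<Sum>a\<in>UNIV. \<Sum>a'\<in>UNIV. f a * f a' * Del Y (b,b') * mul (bv a) (bv b) i * mul (bv a') (bv b') j)"
    by (rule swap4)
  also have "\<dots> = (\<Sum>b\<in>UNIV. \<Sum>b'\<in>UNIV. Del Y (b,b') * (\<Sum>a\<in>UNIV. f a * mul (bv a) (bv b) i * (\<Sum>a'\<in>UNIV. f a' * mul (bv a') (bv b') j)))"
    by (simp only: sum_distrib_left mult_ac)
  also have "\<dots> = (\<Sum>b\<in>UNIV. \<Sum>b'\<in>UNIV. Del Y (b,b') * (mul f (bv b) i * mul f (bv b') j))"
    by (simp only: lin_pt[OF linMulL] sum_distrib_right[symmetric])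
  finally show ?thesis .
qed

lemma Del_mulR: assumes f: "f \<in> G"
  shows "Del (mul Y f) (i,j) = (\<Sum>b\<in>UNIV. \<Sum>b'\<in>UNIV. Del Y (b,b') * (mul (bv b) f i * mul (bv b') f j))"
proof -
  have "Del (mul Y f) (i,j) = (\<Sum>a\<in>UNIV. \<Sum>a'\<in>UNIV. \<Sum>b\<in>UNIV. \<Sum>b'\<in>UNIV. Del Y (a,a') * f b * f b' * mul (bv a) (bv b) i * mul (bv a') (bv b') j)"
    by (simp only: mulDel sum_pair G_Del_pt[OF f] mult.assoc)
  also have "\<dots> = (\<Sum>a\<in>UNIV. \<Sum>a'\<in>UNIV. Del Y (a,a') * (\<Sum>b\<in>UNIV. f b * mul (bv a) (bv b) i * (\<Sum>b'\<in>UNIV. f b' * mul (bv a') (bv b') j)))"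
    by (simp only: sum_distrib_left mult_ac)
  also have "\<dots> = (\<Sum>b\<in>UNIV. \<Sum>b'\<in>UNIV. Del Y (b,b') * (mul (bv b) f i * mul (bv b') f j))"
    by (simp only: lin_pt[OF linMulR] sum_distrib_right[symmetric])
  finally show ?thesis .
qed

lemma C_mulL: assumes f: "f \<in> G" and Y: "Y \<in> C h k" shows "mul f Y \<in> C (mul f h) (mul f k)"
proof -
  have PA: "\<And>v. P (mul f v) = mul f (P v)" by (simp only: P_mul P_G[OF f])
  show ?thesis unfolding C_def
    using tmapPid_gen[OF Y linMulR linMulR PA Del_mulL[OF f]] tmapidP_gen[OF Y linMulR linMulR PA Del_mulL[OF f]]
    by blast
qed

lemma C_mulR: assumes f: "f \<in> G" and Y: "Y \<in> C h k" shows "mul Y f \<in> C (mul h f) (mul k f)"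
proof -
  have PA: "\<And>v. P (mul v f) = mul (P v) f" by (simp only: P_mul P_G[OF f])
  show ?thesis unfolding C_def
    using tmapPid_gen[OF Y linMulL linMulL PA Del_mulR[OF f]] tmapidP_gen[OF Y linMulL linMulL PA Del_mulR[OF f]]
    by blast
qed

lemma C_smul: assumes Y: "Y \<in> C h k" shows "smul c Y \<in> C h k"
proof -
  have D: "Del (smul c Y) = smul c (Del Y)" by (rule linear_f_smul[OF linDel])
  have 1: "tmap P id (Del (smul c Y)) = tens2 h (smul c Y)"
  proof (rule ext, clarify)
    fix p q
    have "(\<lambda>i. Del (smul c Y) (i,q)) = smul c (\<lambda>i. Del Y (i,q))" by (rule ext) (simp add: D)
    then have "tmap P id (Del (smul c Y)) (p,q) = c * P (\<lambda>i. Del Y (i,q)) p"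
      by (simp add: tmap_Pid_pt linear_f_smul[OF linP])
    also have "\<dots> = c * tmap P id (Del Y) (p,q)" by (simp only: tmap_Pid_pt)
    finally show "tmap P id (Del (smul c Y)) (p,q) = tens2 h (smul c Y) (p,q)" using Y unfolding C_def by simp
  qed
  have 2: "tmap id P (Del (smul c Y)) = tens2 (smul c Y) k"
  proof (rule ext, clarify)
    fix p q
    have "(\<lambda>j. Del (smul c Y) (p,j)) = smul c (\<lambda>j. Del Y (p,j))" by (rule ext) (simp add: D)
    then have "tmap id P (Del (smul c Y)) (p,q) = c * P (\<lambda>j. Del Y (p,j)) q"
      by (simp add: tmap_idP_pt linear_f_smul[OF linP])
    also have "\<dots> = c * tmap id P (Del Y) (p,q)" by (simp only: tmap_idP_pt)
    finally show "tmap id P (Del (smul c Y)) (p,q) = tens2 (smul c Y) k (p,q)" using Y unfolding C_def by simp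
  qed
  show ?thesis unfolding C_def using 1 2 by blast
qed

end

context LM begin

lemma assoc_G: "a \<in> G \<Longrightarrow> b \<in> G \<Longrightarrow> c \<in> G \<Longrightarrow> mul a (mul b c) = mul (mul a b) c"
  using smul_cancel[OF Phi_nz C_assoc[OF G_C G_C G_C]] by blast

lemma mulG: "a \<in> G \<Longrightarrow> b \<in> G \<Longrightarrow> mul a b \<in> G" using G_group by blast
lemma commG: "a \<in> G \<Longrightarrow> b \<in> G \<Longrightarrow> mul a b = mul b a" using G_abelian by blast

definition Gr :: "('b \<Rightarrow> 'k) monoid" where "Gr = \<lparr>carrier = G, mult = mul, one = one\<rparr>"

lemma Gr_simps[simp]: "carrier Gr = G" "x \<otimes>\<^bsub>Gr\<^esub> y = mul x y" "\<one>\<^bsub>Gr\<^esub> = one"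
  by (simp_all add: Gr_def)

lemma cgGr: "comm_group Gr"
proof (rule comm_groupI)
  show "\<And>x y. x \<in> carrier Gr \<Longrightarrow> y \<in> carrier Gr \<Longrightarrow> x \<otimes>\<^bsub>Gr\<^esub> y \<in> carrier Gr" using mulG by simp
  show "\<one>\<^bsub>Gr\<^esub> \<in> carrier Gr" using one_G by simp
  show "\<And>x y z. x \<in> carrier Gr \<Longrightarrow> y \<in> carrier Gr \<Longrightarrow> z \<in> carrier Gr \<Longrightarrow>
      x \<otimes>\<^bsub>Gr\<^esub> y \<otimes>\<^bsub>Gr\<^esub> z = x \<otimes>\<^bsub>Gr\<^esub> (y \<otimes>\<^bsub>Gr\<^esub> z)" using assoc_G by simp
  show "\<And>x y. x \<in> carrier Gr \<Longrightarrow> y \<in> carrier Gr \<Longrightarrow> x \<otimes>\<^bsub>Gr\<^esub> y = y \<otimes>\<^bsub>Gr\<^esub> x" using commG by simp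
  show "\<And>x. x \<in> carrier Gr \<Longrightarrow> \<one>\<^bsub>Gr\<^esub> \<otimes>\<^bsub>Gr\<^esub> x = x" using unitL by simp
  show "\<And>x. x \<in> carrier Gr \<Longrightarrow> \<exists>y\<in>carrier Gr. y \<otimes>\<^bsub>Gr\<^esub> x = \<one>\<^bsub>Gr\<^esub>" using G_inv by auto
qed

interpretation grp: comm_group Gr by (rule cgGr)

lemma ginv_eq: assumes f: "f \<in> G" shows "ginv mul one G f = inv\<^bsub>Gr\<^esub> f"
  unfolding ginv_def
proof (rule the_equality)
  show "inv\<^bsub>Gr\<^esub> f \<in> G \<and> mul f (inv\<^bsub>Gr\<^esub> f) = one" using f grp.r_inv[of f] grp.inv_closed[of f] by simp
next
  fix h assume h: "h \<in> G \<and> mul f h = one"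
  then have "h \<otimes>\<^bsub>Gr\<^esub> f = \<one>\<^bsub>Gr\<^esub>" using commG f by simp
  then show "h = inv\<^bsub>Gr\<^esub> f" using grp.inv_equality[of h f] h f by simp
qed

lemma gi_G: "f \<in> G \<Longrightarrow> ginv mul one G f \<in> G" using ginv_eq[of f] grp.inv_closed[of f] by simp
lemma gi_r: "f \<in> G \<Longrightarrow> mul f (ginv mul one G f) = one" using ginv_eq grp.r_inv[of f] by simp
lemma gi_l: "f \<in> G \<Longrightarrow> mul (ginv mul one G f) f = one" using ginv_eq grp.l_inv[of f] by simp
lemma gi_one: "ginv mul one G one = one" using ginv_eq[OF one_G] grp.inv_one by simp
lemma gi_mul: "e \<in> G \<Longrightarrow> f \<in> G \<Longrightarrow> ginv mul one G (mul e f) = mul (ginv mul one G f) (ginv mul one G e)"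
  using ginv_eq mulG grp.inv_mult_group[of e f] by simp

lemma Phi_n1: "a \<in> G \<Longrightarrow> b \<in> G \<Longrightarrow> Phi a one b = 1" by (simp add: Phi_norm G_eps)

lemma Phi_n2: assumes a: "a \<in> G" and b: "b \<in> G" shows "Phi a b one = 1"
proof -
  have "Phi a b (mul one one) * Phi (mul a b) one one = Phi b one one * Phi a (mul b one) one * Phi a b one"
    by (rule cocycle_G[OF a b one_G one_G])
  then have "Phi a b one = Phi a b one * Phi a b one"
    using Phi_n1[OF mulG[OF a b] one_G] Phi_n1[OF b one_G] by (simp add: unitL unitR)
  then show ?thesis using Phi_nz[OF a b one_G] by simp
qed

lemma Phi_n3: assumes a: "a \<in> G" and b: "b \<in> G" shows "Phi one a b = 1"
proof -
  have "Phi one one (mul a b) * Phi (mul one one) a b = Phi one a b * Phi one (mul one a) b * Phi one one a"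
    by (rule cocycle_G[OF one_G one_G a b])
  then have "Phi one a b = Phi one a b * Phi one a b"
    using Phi_n1[OF one_G mulG[OF a b]] Phi_n1[OF one_G a] by (simp add: unitL unitR)
  then show ?thesis using Phi_nz[OF one_G a b] by simp
qed

lemma scalar_G: assumes e: "e \<in> G" and f: "f \<in> G" and g: "g \<in> G"
  shows "(Phi (mul e g) (ginv mul one G e) e * Phi (mul f g) (ginv mul one G f) f * Phi e (mul f g) (ginv mul one G f) * Phi e f g * Phi (mul e f) (ginv mul one G f) (ginv mul one G e))
       / (Phi e (ginv mul one G e) e * Phi f (ginv mul one G f) f * Phi e f (ginv mul one G f) * Phi (mul (mul e f) g) (ginv mul one G f) (ginv mul one G e))
       = (Phi g e f * Phi e f g * Phi (mul (mul e f) g) (ginv mul one G (mul e f)) (mul e f))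
       / (Phi e g f * Phi (mul e f) (ginv mul one G (mul e f)) (mul e f))"
proof -
  have "(Phi (e \<otimes>\<^bsub>Gr\<^esub> g) (inv\<^bsub>Gr\<^esub> e) e * Phi (f \<otimes>\<^bsub>Gr\<^esub> g) (inv\<^bsub>Gr\<^esub> f) f * Phi e (f \<otimes>\<^bsub>Gr\<^esub> g) (inv\<^bsub>Gr\<^esub> f) * Phi e f g * Phi (e \<otimes>\<^bsub>Gr\<^esub> f) (inv\<^bsub>Gr\<^esub> f) (inv\<^bsub>Gr\<^esub> e))
       / (Phi e (inv\<^bsub>Gr\<^esub> e) e * Phi f (inv\<^bsub>Gr\<^esub> f) f * Phi e f (inv\<^bsub>Gr\<^esub> f) * Phi (e \<otimes>\<^bsub>Gr\<^esub> f \<otimes>\<^bsub>Gr\<^esub> g) (inv\<^bsub>Gr\<^esub> f) (inv\<^bsub>Gr\<^esub> e))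
       = (Phi g e f * Phi e f g * Phi (e \<otimes>\<^bsub>Gr\<^esub> f \<otimes>\<^bsub>Gr\<^esub> g) (inv\<^bsub>Gr\<^esub> (e \<otimes>\<^bsub>Gr\<^esub> f)) (e \<otimes>\<^bsub>Gr\<^esub> f))
       / (Phi e g f * Phi (e \<otimes>\<^bsub>Gr\<^esub> f) (inv\<^bsub>Gr\<^esub> (e \<otimes>\<^bsub>Gr\<^esub> f)) (e \<otimes>\<^bsub>Gr\<^esub> f))"
  proof (rule grp_scalar[OF cgGr])
    show "e \<in> carrier Gr" "f \<in> carrier Gr" "g \<in> carrier Gr" using e f g by simp_all
    show "\<And>a b c d. a \<in> carrier Gr \<Longrightarrow> b \<in> carrier Gr \<Longrightarrow> c \<in> carrier Gr \<Longrightarrow> d \<in> carrier Gr \<Longrightarrow>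
        Phi a b (c \<otimes>\<^bsub>Gr\<^esub> d) * Phi (a \<otimes>\<^bsub>Gr\<^esub> b) c d = Phi b c d * Phi a (b \<otimes>\<^bsub>Gr\<^esub> c) d * Phi a b c"
      using cocycle_G by simp
    show "\<And>a b c. a \<in> carrier Gr \<Longrightarrow> b \<in> carrier Gr \<Longrightarrow> c \<in> carrier Gr \<Longrightarrow> Phi a b c \<noteq> 0"
      using Phi_nz by simp
    show "\<And>a b. a \<in> carrier Gr \<Longrightarrow> b \<in> carrier Gr \<Longrightarrow> Phi a \<one>\<^bsub>Gr\<^esub> b = 1" using Phi_n1 by simp
    show "\<And>a b. a \<in> carrier Gr \<Longrightarrow> b \<in> carrier Gr \<Longrightarrow> Phi a b \<one>\<^bsub>Gr\<^esub> = 1" using Phi_n2 by simp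
    show "\<And>a b. a \<in> carrier Gr \<Longrightarrow> b \<in> carrier Gr \<Longrightarrow> Phi \<one>\<^bsub>Gr\<^esub> a b = 1" using Phi_n3 by simp
  qed
  then show ?thesis using e f g mulG by (simp add: ginv_eq)
qed

end

lemma smul_solve: "a \<noteq> 0 \<Longrightarrow> smul a x = smul b y \<Longrightarrow> x = smul (b / a) (y::'a \<Rightarrow> 'k::field)"
proof (rule ext)
  fix i assume a: "a \<noteq> 0" and e: "smul a x = smul b y"
  have "a * x i = b * y i" using fun_cong[OF e, of i] by simp
  then show "x i = smul (b / a) y i" using a by (simp add: field_simps)
qed

context LM begin

abbreviation gi where "gi \<equiv> ginv mul one G"

lemma mul_smulL: "mul (smul c x) y = smul c (mul x y)" using linear_f_smul[OF linMulL] .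
lemma mul_smulR: "mul x (smul c y) = smul c (mul x y)" using linear_f_smul[OF linMulR] .

lemma Rg_C: "Rg Del P one g = C g one" unfolding Rg_def C_def by simp

lemma act_in: assumes g: "g \<in> G" and f: "f \<in> G" and X: "X \<in> C g one"
  shows "gact mul one Phi G g f X \<in> C g one"
proof -
  have 1: "mul (mul f X) (gi f) \<in> C (mul (mul f g) (gi f)) (mul (mul f one) (gi f))"
    by (rule C_mulR[OF gi_G[OF f] C_mulL[OF f X]])
  have 2: "mul (mul f g) (gi f) = g"
    using assoc_G[OF g f gi_G[OF f]] commG[OF f g] gi_r[OF f] unitR by simp
  have 3: "mul (mul f one) (gi f) = one" using gi_r[OF f] unitR by simp
  show ?thesis unfolding gact_def using C_smul 1 2 3 by simp
qed

lemma act_one: assumes g: "g \<in> G" shows "gact mul one Phi G g one X = X"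
  unfolding gact_def gi_one using Phi_n1[OF g one_G] Phi_n1[OF one_G one_G] by (simp add: unitL unitR)

lemma act_comp: assumes g: "g \<in> G" and e: "e \<in> G" and f: "f \<in> G" and X: "X \<in> C g one"
  shows "gact mul one Phi G g e (gact mul one Phi G g f X) = smul (Phitilde Phi g e f) (gact mul one Phi G g (mul e f) X)"
proof -
  let ?f' = "gi f" and ?e' = "gi e" and ?ef = "mul e f"
  have f': "?f' \<in> G" and e': "?e' \<in> G" using gi_G e f by auto
  have ef: "?ef \<in> G" using mulG e f by auto
  have X1: "mul f X \<in> C (mul f g) f" using C_mulL[OF f X] unitR by simp
  have Z: "mul ?ef X \<in> C (mul ?ef g) ?ef" using C_mulL[OF ef X] unitR by simp
  have fg: "mul f g \<in> G" and efg: "mul ?ef g \<in> G" using mulG f g ef by auto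
  have b: "mul e (mul (mul f X) ?f') = smul (Phi e (mul f g) ?f' / Phi e f ?f') (mul (mul e (mul f X)) ?f')"
    by (rule smul_solve[OF Phi_nz[OF e f f'] C_assoc[OF G_C[OF e] X1 G_C[OF f']]])
  have c: "mul e (mul f X) = smul (Phi e f g) (mul ?ef X)"
    using C_assoc[OF G_C[OF e] G_C[OF f] X] Phi_n2[OF e f] by simp
  have d: "mul (mul (mul ?ef X) ?f') ?e' = smul (Phi ?ef ?f' ?e' / Phi (mul ?ef g) ?f' ?e') (mul (mul ?ef X) (mul ?f' ?e'))"
    by (rule smul_solve[OF Phi_nz[OF efg f' e'] C_assoc[OF Z G_C[OF f'] G_C[OF e'], symmetric]])
  have inv: "gi ?ef = mul ?f' ?e'" by (rule gi_mul[OF e f])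
  have L: "gact mul one Phi G g e (gact mul one Phi G g f X)
     = smul ((Phi (mul e g) ?e' e / Phi e ?e' e) * (Phi (mul f g) ?f' f / Phi f ?f' f)
         * (Phi e (mul f g) ?f' / Phi e f ?f') * Phi e f g * (Phi ?ef ?f' ?e' / Phi (mul ?ef g) ?f' ?e'))
         (mul (mul ?ef X) (gi ?ef))"
    unfolding gact_def inv by (simp only: mul_smulL mul_smulR b c d smul_smul) (simp only: mult_ac)
  have R: "smul (Phitilde Phi g e f) (gact mul one Phi G g (mul e f) X)
     = smul (Phitilde Phi g e f * (Phi (mul ?ef g) (gi ?ef) ?ef / Phi ?ef (gi ?ef) ?ef)) (mul (mul ?ef X) (gi ?ef))"
    unfolding gact_def by (simp only: smul_smul)
  have S: "(Phi (mul e g) ?e' e / Phi e ?e' e) * (Phi (mul f g) ?f' f / Phi f ?f' f)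
         * (Phi e (mul f g) ?f' / Phi e f ?f') * Phi e f g * (Phi ?ef ?f' ?e' / Phi (mul ?ef g) ?f' ?e')
       = Phitilde Phi g e f * (Phi (mul ?ef g) (gi ?ef) ?ef / Phi ?ef (gi ?ef) ?ef)"
  proof -
    have sc: "(Phi (mul e g) ?e' e * Phi (mul f g) ?f' f * Phi e (mul f g) ?f' * Phi e f g * Phi ?ef ?f' ?e')
       / (Phi e ?e' e * Phi f ?f' f * Phi e f ?f' * Phi (mul ?ef g) ?f' ?e')
       = (Phi g e f * Phi e f g * Phi (mul ?ef g) (gi ?ef) ?ef) / (Phi e g f * Phi ?ef (gi ?ef) ?ef)"
      by (rule scalar_G[OF e f g])
    show ?thesis using sc unfolding Phitilde_def by (simp add: field_simps)
  qed
  show ?thesis using L R S by simp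
qed

end

lemma smul_addL: "smul (a + b) u = smul a u + smul b u" for u :: "'a \<Rightarrow> 'k::field"
  by (rule ext) (simp add: algebra_simps)

lemma lspan_sub: "subspace_f (lspan A)"
proof -
  have z: "0 \<in> lspan A" unfolding lspan_def by (rule CollectI, rule exI[of _ "{}"]) simp
  have a: "x + y \<in> lspan A" if x: "x \<in> lspan A" and y: "y \<in> lspan A" for x y
  proof -
    from x obtain F1 c1 where F1: "finite F1" "F1 \<subseteq> A" "x = (\<Sum>u\<in>F1. smul (c1 u) u)" unfolding lspan_def by blast
    from y obtain F2 c2 where F2: "finite F2" "F2 \<subseteq> A" "y = (\<Sum>u\<in>F2. smul (c2 u) u)" unfolding lspan_def by blast
    let ?F = "F1 \<union> F2"
    let ?c = "\<lambda>u. (if u \<in> F1 then c1 u else 0) + (if u \<in> F2 then c2 u else 0)"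
    have "x = (\<Sum>u\<in>?F. smul (if u \<in> F1 then c1 u else 0) u)"
      unfolding F1(3) by (rule sum.mono_neutral_cong_left) (use F1 F2 in auto)
    moreover have "y = (\<Sum>u\<in>?F. smul (if u \<in> F2 then c2 u else 0) u)"
      unfolding F2(3) by (rule sum.mono_neutral_cong_left) (use F1 F2 in auto)
    ultimately have eq: "x + y = (\<Sum>u\<in>?F. smul (?c u) u)"
      by (simp only: sum.distrib smul_addL)
    have "finite ?F \<and> ?F \<subseteq> A \<and> x + y = (\<Sum>u\<in>?F. smul (?c u) u)" using F1 F2 eq by blast
    then show ?thesis unfolding lspan_def by (intro CollectI exI)
  qed
  have s: "smul c x \<in> lspan A" if x: "x \<in> lspan A" for c x
  proof -
    from x obtain F1 c1 where F1: "finite F1" "F1 \<subseteq> A" "x = (\<Sum>u\<in>F1. smul (c1 u) u)" unfolding lspan_def by blast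
    have "smul c x = (\<Sum>u\<in>F1. smul (c * c1 u) u)" unfolding F1(3) by (simp only: smul_sum smul_smul)
    then have "finite F1 \<and> F1 \<subseteq> A \<and> smul c x = (\<Sum>u\<in>F1. smul ((\<lambda>u. c * c1 u) u) u)" using F1 by blast
    then show ?thesis unfolding lspan_def by (intro CollectI exI)
  qed
  show ?thesis unfolding subspace_f_def using z a s by blast
qed

lemma lspan_agree:
  assumes l1: "linear_f L1" and l2: "linear_f L2" and h: "\<And>u. u \<in> A \<Longrightarrow> L1 u = L2 u" and v: "v \<in> lspan A"
  shows "L1 v = L2 v"
proof -
  from v obtain F c where F: "finite F" "F \<subseteq> A" "v = (\<Sum>u\<in>F. smul (c u) u)" unfolding lspan_def by blast
  have "L1 v = (\<Sum>u\<in>F. smul (c u) (L1 u))" by (simp only: F(3) linear_f_sum[OF l1] linear_f_smul[OF l1])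
  also have "\<dots> = (\<Sum>u\<in>F. smul (c u) (L2 u))" using h F(2) by (intro sum.cong) auto
  also have "\<dots> = L2 v" by (simp only: F(3) linear_f_sum[OF l2] linear_f_smul[OF l2])
  finally show ?thesis .
qed

context LM begin

lemma eps_zero: "eps 0 = 0" by (rule linear_fn_zero[OF linEps])

lemma indep:
  assumes "finite F" "F \<subseteq> G" "\<And>p. (\<Sum>g\<in>F. l g * g p) = 0" "g \<in> F"
  shows "l g = 0"
  using assms
proof (induction F arbitrary: l g rule: finite_induct)
  case empty then show ?case by simp
next
  case (insert h F)
  have hG: "h \<in> G" and FG: "F \<subseteq> G" using insert by auto
  have H: "\<And>p. l h * h p + (\<Sum>g\<in>F. l g * g p) = 0" using insert by simp
  have v0: "(\<Sum>g\<in>insert h F. smul (l g) g) = 0"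
    by (rule ext) (simp only: sum_apply smul_apply zero_fun_def insert.prems(2))
  have D: "\<And>i j. l h * (h i * h j) + (\<Sum>g\<in>F. l g * (g i * g j)) = 0"
  proof -
    fix i j
    have "Del (\<Sum>g\<in>insert h F. smul (l g) g) = 0" by (simp only: v0 linear_f_zero[OF linDel])
    then have "Del (\<Sum>g\<in>insert h F. smul (l g) g) (i,j) = 0" by simp
    then have "(\<Sum>g\<in>insert h F. l g * Del g (i,j)) = 0"
      by (simp only: linear_f_sum[OF linDel] linear_f_smul[OF linDel] sum_apply smul_apply)
    then show "l h * (h i * h j) + (\<Sum>g\<in>F. l g * (g i * g j)) = 0"
      using insert(1,2) G_Del_pt insert.prems(1) by (simp add: subset_iff)
  qed
  have IHa: "\<And>i g. g \<in> F \<Longrightarrow> l g * (g i - h i) = 0"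
  proof -
    fix i g assume g: "g \<in> F"
    show "l g * (g i - h i) = 0"
    proof (rule insert.IH[OF FG _ g])
      fix j
      have "(\<Sum>g\<in>F. l g * (g i - h i) * g j) = (\<Sum>g\<in>F. l g * (g i * g j)) - h i * (\<Sum>g\<in>F. l g * g j)"
        by (simp add: sum_subtractf sum_distrib_left algebra_simps)
      also have "\<dots> = - (l h * (h i * h j)) - h i * (- (l h * h j))"
      proof -
        have d1: "(\<Sum>g\<in>F. l g * (g i * g j)) = - (l h * (h i * h j))"
          using D[of i j] by (simp add: eq_neg_iff_add_eq_0 add.commute)
        have d2: "(\<Sum>g\<in>F. l g * g j) = - (l h * h j)"
          using H[of j] by (simp add: eq_neg_iff_add_eq_0 add.commute)
        show ?thesis by (simp only: d1 d2)
      qed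
      also have "\<dots> = 0" by (simp add: algebra_simps)
      finally show "(\<Sum>g\<in>F. l g * (g i - h i) * g j) = 0" .
    qed
  qed
  have lF: "\<And>g. g \<in> F \<Longrightarrow> l g = 0"
  proof -
    fix g assume g: "g \<in> F"
    have "g \<noteq> h" using g insert(2) by auto
    then obtain i where "g i \<noteq> h i" by auto
    then show "l g = 0" using IHa[OF g, of i] by simp
  qed
  have "h \<noteq> 0" using G_eps[OF hG] eps_zero by auto
  then have "\<exists>p. h p \<noteq> 0" by (auto simp: fun_eq_iff)
  then obtain p where hp: "h p \<noteq> 0" by blast
  have "l h * h p = 0" using H[of p] lF by simp
  then have lh: "l h = 0" using hp by simp
  show ?case using insert.prems(3) lF lh by auto
qed

lemma conj5:
  assumes c: "\<forall>g\<in>G. c g \<in> C g one" and s: "(\<Sum>g\<in>G. c g) = 0"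
  shows "\<forall>g\<in>G. c g = 0"
proof -
  have key: "(\<Sum>g\<in>G. c g q * g p) = 0" for p q
  proof -
    have "(\<lambda>i. Del (\<Sum>g\<in>G. c g) (i,q)) = (\<Sum>g\<in>G. (\<lambda>i. Del (c g) (i,q)))"
      by (rule ext) (simp only: linear_f_sum[OF linDel] sum_apply)
    then have "P (\<lambda>i. Del (\<Sum>g\<in>G. c g) (i,q)) p = (\<Sum>g\<in>G. tmap P id (Del (c g)) (p,q))"
      by (simp only: linear_f_sum[OF linP] sum_apply tmap_Pid_pt)
    also have "\<dots> = (\<Sum>g\<in>G. c g q * g p)" using c unfolding C_def by (intro sum.cong) (auto simp: mult.commute)
    finally have "(\<Sum>g\<in>G. c g q * g p) = P (\<lambda>i. Del (\<Sum>g\<in>G. c g) (i,q)) p" by simp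
    also have "\<dots> = 0" unfolding s using linear_f_zero[OF linDel] linear_f_zero[OF linP]
      by (simp add: zero_fun_def)
    finally show ?thesis .
  qed
  show ?thesis
  proof
    fix g assume g: "g \<in> G"
    show "c g = 0"
    proof (rule ext)
      fix q
      have "\<And>p. (\<Sum>g\<in>G. (\<lambda>g. c g q) g * g p) = 0" using key by simp
      from indep[OF G_finite subset_refl this g] show "c g q = 0 q" by simp
    qed
  qed
qed

end

context LM begin

lemma coords_ex: "\<exists>a. \<forall>i. P (bv i) = (\<Sum>g\<in>G. smul (a i g) g)"
proof -
  have "\<forall>i. \<exists>c. P (bv i) = (\<Sum>g\<in>G. smul (c g) g)"
  proof
    fix i
    have "P (bv i) \<in> lspan G" using P_in Mg0 by simp
    then obtain F c where F: "finite F" "F \<subseteq> G" "P (bv i) = (\<Sum>u\<in>F. smul (c u) u)" unfolding lspan_def by blast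
    have "P (bv i) = (\<Sum>u\<in>G. smul (if u \<in> F then c u else 0) u)"
      unfolding F(3) by (rule sum.mono_neutral_cong_left) (use F G_finite in auto)
    then show "\<exists>c. P (bv i) = (\<Sum>g\<in>G. smul (c g) g)" by (rule exI[where x = "\<lambda>u. if u \<in> F then c u else 0"])
  qed
  then show ?thesis by (rule choice)
qed

definition acoef where "acoef = (SOME a. \<forall>i. P (bv i) = (\<Sum>g\<in>G. smul (a i g) g))"
lemma acoef: "P (bv i) = (\<Sum>g\<in>G. smul (acoef i g) g)"
  using someI_ex[OF coords_ex] unfolding acoef_def by blast

definition kap where "kap g v = (\<Sum>i\<in>UNIV. v i * acoef i g)"

lemma lin_kap: "linear_fn (kap g)"
  unfolding linear_fn_def kap_def by (simp add: sum.distrib sum_distrib_left algebra_simps)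

lemma P_kap: "P v = (\<Sum>g\<in>G. smul (kap g v) g)"
proof (rule ext)
  fix p
  have "P v p = (\<Sum>i\<in>UNIV. v i * P (bv i) p)" by (rule lin_pt[OF linP, symmetric])
  also have "\<dots> = (\<Sum>i\<in>UNIV. \<Sum>g\<in>G. v i * acoef i g * g p)"
    by (simp only: acoef sum_apply smul_apply sum_distrib_left mult.assoc)
  also have "\<dots> = (\<Sum>g\<in>G. \<Sum>i\<in>UNIV. v i * acoef i g * g p)" by (rule sum.swap)
  also have "\<dots> = (\<Sum>g\<in>G. smul (kap g v) g) p"
    by (simp only: sum_apply smul_apply kap_def sum_distrib_right)
  finally show "P v p = (\<Sum>g\<in>G. smul (kap g v) g) p" .
qed

lemma kap_delta: assumes g: "g \<in> G" and h: "h \<in> G" shows "kap g h = (if g = h then 1 else 0)"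
proof -
  have "\<And>p. (\<Sum>g'\<in>G. (kap g' h - (if g' = h then 1 else 0)) * g' p) = 0"
  proof -
    fix p
    have "(\<Sum>g'\<in>G. (kap g' h - (if g' = h then 1 else 0)) * g' p)
        = (\<Sum>g'\<in>G. kap g' h * g' p) - (\<Sum>g'\<in>G. (if g' = h then 1 else 0) * g' p)"
      by (simp add: sum_subtractf left_diff_distrib)
    also have "(\<Sum>g'\<in>G. kap g' h * g' p) = P h p" by (simp add: P_kap[of h] sum_apply)
    also have "(\<Sum>g'\<in>G. (if g' = h then 1 else 0) * g' p) = h p"
    proof -
      have "(\<Sum>g'\<in>G. (if g' = h then 1 else 0) * g' p) = (\<Sum>g'\<in>G. if g' = h then h p else 0)"
        by (rule sum.cong) auto
      then show ?thesis using h G_finite by simp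
    qed
    finally show "(\<Sum>g'\<in>G. (kap g' h - (if g' = h then 1 else 0)) * g' p) = 0" using P_G[OF h] by simp
  qed
  from indep[OF G_finite subset_refl this g] show ?thesis by (simp split: if_splits)
qed

lemma kap_P: assumes g: "g \<in> G" shows "kap g (P v) = kap g v"
proof -
  have "\<And>p. (\<Sum>g'\<in>G. (kap g' (P v) - kap g' v) * g' p) = 0"
  proof -
    fix p
    have a1: "(\<Sum>g'\<in>G. kap g' (P v) * g' p) = P (P v) p" by (simp only: P_kap[of "P v"] sum_apply smul_apply)
    have a2: "(\<Sum>g'\<in>G. kap g' v * g' p) = P v p" by (simp only: P_kap[of v] sum_apply smul_apply)
    have "(\<Sum>g'\<in>G. (kap g' (P v) - kap g' v) * g' p) = P (P v) p - P v p"
      by (simp only: sum_subtractf left_diff_distrib a1 a2)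
    then show "(\<Sum>g'\<in>G. (kap g' (P v) - kap g' v) * g' p) = 0" by (simp add: PP)
  qed
  from indep[OF G_finite subset_refl this g] show ?thesis by simp
qed

definition Lg where "Lg g x = (\<lambda>j. kap g (\<lambda>i. Del x (i,j)))"

lemma lin_Lg: "linear_f (Lg g)"
proof -
  have "Lg g (x + y) = Lg g x + Lg g y" for x y
  proof (rule ext)
    fix j
    have "(\<lambda>i. Del (x+y) (i,j)) = (\<lambda>i. Del x (i,j)) + (\<lambda>i. Del y (i,j))" by (rule ext) (simp add: linear_f_add[OF linDel])
    then show "Lg g (x + y) j = (Lg g x + Lg g y) j" unfolding Lg_def by (simp add: linear_fn_add[OF lin_kap])
  qed
  moreover have "Lg g (smul c x) = smul c (Lg g x)" for c x
  proof -
    have "(\<lambda>i. Del (smul c x) (i,j)) = smul c (\<lambda>i. Del x (i,j))" for j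
      by (rule ext) (simp add: linear_f_smul[OF linDel])
    then show ?thesis unfolding Lg_def by (intro ext) (simp add: linear_fn_smul[OF lin_kap])
  qed
  ultimately show ?thesis unfolding linear_f_def by blast
qed

lemma smul_lin: "linear_f (\<lambda>x. smul (kap g x) g)"
  unfolding linear_f_def by (simp only: linear_fn_add[OF lin_kap] linear_fn_smul[OF lin_kap] smul_addL smul_smul simp_thms allI)

lemma Tlin: "linear_f (\<lambda>t. P (\<lambda>j. kap g (\<lambda>i. t (i,j))))"
proof -
  have "(\<lambda>j. kap g (\<lambda>i. (t1 + t2) (i,j))) = (\<lambda>j. kap g (\<lambda>i. t1 (i,j))) + (\<lambda>j. kap g (\<lambda>i. t2 (i,j)))" for t1 t2 :: "'b \<times> 'b \<Rightarrow> 'k"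
  proof (rule ext)
    fix j
    have "(\<lambda>i. (t1 + t2) (i,j)) = (\<lambda>i. t1 (i,j)) + (\<lambda>i. t2 (i,j))" by (rule ext) simp
    then show "kap g (\<lambda>i. (t1 + t2) (i,j)) = ((\<lambda>j. kap g (\<lambda>i. t1 (i,j))) + (\<lambda>j. kap g (\<lambda>i. t2 (i,j)))) j"
      by (simp add: linear_fn_add[OF lin_kap])
  qed
  moreover have "(\<lambda>j. kap g (\<lambda>i. (smul c t) (i,j))) = smul c (\<lambda>j. kap g (\<lambda>i. t (i,j)))" for c and t :: "'b \<times> 'b \<Rightarrow> 'k"
  proof (rule ext)
    fix j
    have "(\<lambda>i. (smul c t) (i,j)) = smul c (\<lambda>i. t (i,j))" by (rule ext) simp
    then show "kap g (\<lambda>i. (smul c t) (i,j)) = smul c (\<lambda>j. kap g (\<lambda>i. t (i,j))) j"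
      by (simp add: linear_fn_smul[OF lin_kap])
  qed
  ultimately show ?thesis unfolding linear_f_def by (simp add: linear_f_add[OF linP] linear_f_smul[OF linP])
qed

lemma key: assumes g: "g \<in> G" shows "P (Lg g x) = smul (kap g x) g"
proof (rule agree_f[OF gr linear_f_comp[OF linP lin_Lg] smul_lin])
  fix n z assume z: "z \<in> Mg n"
  show "P (Lg g z) = smul (kap g z) g"
  proof (cases "n = 0")
    case True
    then have zl: "z \<in> lspan G" using z Mg0 by simp
    show ?thesis
    proof (rule lspan_agree[OF linear_f_comp[OF linP lin_Lg] smul_lin _ zl])
      fix h assume h: "h \<in> G"
      have "Lg g h = smul (kap g h) h"
      proof (rule ext)
        fix j
        have "(\<lambda>i. Del h (i,j)) = smul (h j) h" by (rule ext) (simp add: G_Del_pt[OF h] mult.commute)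
        then show "Lg g h j = smul (kap g h) h j" unfolding Lg_def by (simp add: linear_fn_smul[OF lin_kap] mult.commute)
      qed
      then show "P (Lg g h) = smul (kap g h) g" using kap_delta[OF g h] linear_f_smul[OF linP] P_G[OF h] by auto
    qed
  next
    case False
    have r: "kap g z = 0" using kap_P[OF g, of z] P_hom[OF z] False linear_fn_zero[OF lin_kap] by simp
    have "P (Lg g z) = 0"
    proof -
      let ?T = "\<lambda>t. P (\<lambda>j. kap g (\<lambda>i. t (i,j)))"
      have "?T (Del z) = 0"
      proof (rule lspan_vanish[OF Tlin _ Del_hom[OF z]])
        fix u assume "u \<in> (\<Union>i\<le>n. tens_sp (Mg i) (Mg (n - i)))"
        then obtain i where i: "i \<le> n" and u: "u \<in> tens_sp (Mg i) (Mg (n - i))" by blast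
        show "?T u = 0"
        proof (rule lspan_vanish[OF Tlin _ u[unfolded tens_sp_def]])
          fix v assume "v \<in> {tens2 a b |a b. a \<in> Mg i \<and> b \<in> Mg (n - i)}"
          then obtain a b where v: "v = tens2 a b" and a: "a \<in> Mg i" and b: "b \<in> Mg (n - i)" by blast
          have "(\<lambda>j. kap g (\<lambda>i'. v (i',j))) = smul (kap g a) b"
          proof (rule ext)
            fix j
            have "(\<lambda>i'. v (i',j)) = smul (b j) a" by (rule ext) (simp add: v mult.commute)
            then show "kap g (\<lambda>i'. v (i',j)) = smul (kap g a) b j" by (simp add: linear_fn_smul[OF lin_kap] mult.commute)
          qed
          then have "?T v = smul (kap g a) (P b)" by (simp add: linear_f_smul[OF linP])
          moreover have "kap g a = 0 \<or> P b = 0"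
          proof (cases "i = 0")
            case True then show ?thesis using P_hom[OF b] False by simp
          next
            case False then show ?thesis using kap_P[OF g, of a] P_hom[OF a] linear_fn_zero[OF lin_kap] by simp
          qed
          ultimately show "?T v = 0" by auto
        qed
      qed
      then show ?thesis unfolding Lg_def .
    qed
    then show ?thesis using r by simp
  qed
qed

end

context LM begin

lemma Rset_sub: "subspace_f (Rset Del P one)"
proof -
  have z: "tmap id P (Del 0) = tens2 0 one"
  proof (rule ext, clarify)
    fix p q
    have "(\<lambda>j. Del 0 (p,j)) = 0" by (rule ext) (simp add: linear_f_zero[OF linDel])
    then show "tmap id P (Del 0) (p,q) = tens2 0 one (p,q)" by (simp add: tmap_idP_pt linear_f_zero[OF linP])
  qed
  have a: "tmap id P (Del (x+y)) = tens2 (x+y) one" if x: "tmap id P (Del x) = tens2 x one" and y: "tmap id P (Del y) = tens2 y one" for x y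
  proof (rule ext, clarify)
    fix p q
    have "(\<lambda>j. Del (x+y) (p,j)) = (\<lambda>j. Del x (p,j)) + (\<lambda>j. Del y (p,j))" by (rule ext) (simp add: linear_f_add[OF linDel])
    then have "tmap id P (Del (x+y)) (p,q) = tmap id P (Del x) (p,q) + tmap id P (Del y) (p,q)"
      by (simp add: tmap_idP_pt linear_f_add[OF linP])
    then show "tmap id P (Del (x+y)) (p,q) = tens2 (x+y) one (p,q)" using x y by (simp add: algebra_simps)
  qed
  have s: "tmap id P (Del (smul c x)) = tens2 (smul c x) one" if x: "tmap id P (Del x) = tens2 x one" for c x
  proof (rule ext, clarify)
    fix p q
    have "(\<lambda>j. Del (smul c x) (p,j)) = smul c (\<lambda>j. Del x (p,j))" by (rule ext) (simp add: linear_f_smul[OF linDel])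
    then have "tmap id P (Del (smul c x)) (p,q) = c * tmap id P (Del x) (p,q)"
      by (simp add: tmap_idP_pt linear_f_smul[OF linP])
    then show "tmap id P (Del (smul c x)) (p,q) = tens2 (smul c x) one (p,q)" using x by (simp add: algebra_simps)
  qed
  show ?thesis unfolding subspace_f_def Rset_def using z a s by blast
qed

lemma decomp:
  assumes m: "tmap id P (Del m) = tens2 m one" and g: "g \<in> G"
  shows "(\<lambda>q. kap g (\<lambda>i. Del m (i,q))) \<in> C g one"
proof -
  define mg where "mg = (\<lambda>q. kap g (\<lambda>i. Del m (i,q)))"
  have row: "P (\<lambda>l. Del m (q,l)) = smul (m q) one" for q
  proof (rule ext)
    fix r
    have "P (\<lambda>l. Del m (q,l)) r = tmap id P (Del m) (q,r)" by (simp only: tmap_idP_pt)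
    then show "P (\<lambda>l. Del m (q,l)) r = smul (m q) one r" using m by simp
  qed
  have D1: "Del mg (j,l) = (\<Sum>i\<in>UNIV. acoef i g * (\<Sum>q\<in>UNIV. Del m (q,l) * Del (bv q) (i,j)))" for j l
  proof -
    have "Del mg (j,l) = (\<Sum>q\<in>UNIV. mg q * Del (bv q) (j,l))" by (rule lin_pt[OF linDel, symmetric])
    also have "\<dots> = (\<Sum>q\<in>UNIV. \<Sum>i\<in>UNIV. Del m (i,q) * acoef i g * Del (bv q) (j,l))"
      by (simp only: mg_def kap_def sum_distrib_right)
    also have "\<dots> = (\<Sum>i\<in>UNIV. \<Sum>q\<in>UNIV. Del m (i,q) * acoef i g * Del (bv q) (j,l))" by (rule sum.swap)
    also have "\<dots> = (\<Sum>i\<in>UNIV. acoef i g * (\<Sum>q\<in>UNIV. Del m (i,q) * Del (bv q) (j,l)))"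
      by (simp only: sum_distrib_left mult_ac)
    also have "\<dots> = (\<Sum>i\<in>UNIV. acoef i g * (\<Sum>q\<in>UNIV. Del m (q,l) * Del (bv q) (i,j)))"
      by (simp only: coassoc)
    finally show ?thesis .
  qed
  have D2: "Del mg (j,l) = (\<Sum>q\<in>UNIV. Del m (q,l) * Lg g (bv q) j)" for j l
  proof -
    have "Del mg (j,l) = (\<Sum>i\<in>UNIV. \<Sum>q\<in>UNIV. acoef i g * (Del m (q,l) * Del (bv q) (i,j)))"
      by (simp only: D1 sum_distrib_left)
    also have "\<dots> = (\<Sum>q\<in>UNIV. \<Sum>i\<in>UNIV. acoef i g * (Del m (q,l) * Del (bv q) (i,j)))" by (rule sum.swap)
    also have "\<dots> = (\<Sum>q\<in>UNIV. Del m (q,l) * (\<Sum>i\<in>UNIV. Del (bv q) (i,j) * acoef i g))"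
      by (simp only: sum_distrib_left mult_ac)
    finally show ?thesis unfolding Lg_def kap_def .
  qed
  have A: "tmap P id (Del mg) = tens2 g mg"
  proof (rule ext, clarify)
    fix p l
    have "(\<lambda>j. Del mg (j,l)) = (\<Sum>q\<in>UNIV. smul (Del m (q,l)) (Lg g (bv q)))"
      by (rule ext) (simp only: D2 sum_apply smul_apply)
    then have "tmap P id (Del mg) (p,l) = (\<Sum>q\<in>UNIV. Del m (q,l) * P (Lg g (bv q)) p)"
      by (simp only: tmap_Pid_pt linear_f_sum[OF linP] linear_f_smul[OF linP] sum_apply smul_apply)
    also have "\<dots> = (\<Sum>q\<in>UNIV. Del m (q,l) * kap g (bv q)) * g p"
      by (simp only: key[OF g] smul_apply sum_distrib_right mult.assoc)
    also have "\<dots> = g p * mg l" by (simp only: linfn_pt[OF lin_kap] mg_def mult.commute)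
    finally show "tmap P id (Del mg) (p,l) = tens2 g mg (p,l)" by simp
  qed
  have B: "tmap id P (Del mg) = tens2 mg one"
  proof (rule ext, clarify)
    fix j r
    have "(\<lambda>l. Del mg (j,l)) = (\<Sum>i\<in>UNIV. smul (acoef i g) (\<Sum>q\<in>UNIV. smul (Del (bv q) (i,j)) (\<lambda>l. Del m (q,l))))"
      by (rule ext) (simp only: D1 sum_apply smul_apply mult_ac)
    then have "tmap id P (Del mg) (j,r) = (\<Sum>i\<in>UNIV. acoef i g * (\<Sum>q\<in>UNIV. Del (bv q) (i,j) * P (\<lambda>l. Del m (q,l)) r))"
      by (simp only: tmap_idP_pt linear_f_sum[OF linP] linear_f_smul[OF linP] sum_apply smul_apply)
    also have "\<dots> = (\<Sum>i\<in>UNIV. acoef i g * ((\<Sum>q\<in>UNIV. m q * Del (bv q) (i,j)) * one r))"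
      by (simp only: row smul_apply sum_distrib_right sum_distrib_left mult_ac)
    also have "\<dots> = (\<Sum>i\<in>UNIV. Del m (i,j) * acoef i g) * one r"
      by (simp only: lin_pt[OF linDel] sum_distrib_right sum_distrib_left mult_ac)
    also have "\<dots> = mg j * one r" by (simp only: mg_def kap_def)
    finally show "tmap id P (Del mg) (j,r) = tens2 mg one (j,r)" by simp
  qed
  show ?thesis using A B unfolding C_def mg_def by blast
qed

lemma decomp_sum:
  shows "m = (\<Sum>g\<in>G. (\<lambda>q. kap g (\<lambda>i. Del m (i,q))))"
proof (rule ext)
  fix q
  have "m q = (\<Sum>i\<in>UNIV. Del m (i,q) * eps (bv i))" by (rule counitL[symmetric])
  also have "\<dots> = eps (\<lambda>i. Del m (i,q))" by (rule linfn_pt[OF linEps])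
  also have "\<dots> = eps (P (\<lambda>i. Del m (i,q)))" by (rule eps_P)
  also have "\<dots> = (\<Sum>g\<in>G. kap g (\<lambda>i. Del m (i,q)) * eps g)"
    by (simp only: P_kap[of "\<lambda>i. Del m (i,q)"] linear_fn_sum[OF linEps] linear_fn_smul[OF linEps])
  also have "\<dots> = (\<Sum>g\<in>G. (\<lambda>q. kap g (\<lambda>i. Del m (i,q)))) q"
    by (simp add: sum_apply G_eps)
  finally show "m q = (\<Sum>g\<in>G. (\<lambda>q. kap g (\<lambda>i. Del m (i,q)))) q" .
qed

lemma conj4: "Rset Del P one = lspan (\<Union>g\<in>G. Rg Del P one g)"
proof
  show "Rset Del P one \<subseteq> lspan (\<Union>g\<in>G. Rg Del P one g)"
  proof
    fix m assume "m \<in> Rset Del P one"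
    then have m: "tmap id P (Del m) = tens2 m one" unfolding Rset_def by simp
    have "(\<Sum>g\<in>G. (\<lambda>q. kap g (\<lambda>i. Del m (i,q)))) \<in> lspan (\<Union>g\<in>G. Rg Del P one g)"
    proof (rule subsp_sum[OF lspan_sub])
      fix g assume g: "g \<in> G"
      have "(\<lambda>q. kap g (\<lambda>i. Del m (i,q))) \<in> Rg Del P one g" using decomp[OF m g] Rg_C by simp
      then show "(\<lambda>q. kap g (\<lambda>i. Del m (i,q))) \<in> lspan (\<Union>g\<in>G. Rg Del P one g)" using g by (intro lspan_gen) blast
    qed
    then show "m \<in> lspan (\<Union>g\<in>G. Rg Del P one g)" using decomp_sum[of m] by simp
  qed
next
  show "lspan (\<Union>g\<in>G. Rg Del P one g) \<subseteq> Rset Del P one"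
    by (rule lspan_subsp[OF Rset_sub]) (auto simp: Rg_def Rset_def)
qed

end

theorem lemma3p1:
  fixes Del :: "('b::finite \<Rightarrow> 'k::field_char_0) \<Rightarrow> ('b \<times> 'b \<Rightarrow> 'k)"
    and eps :: "('b \<Rightarrow> 'k) \<Rightarrow> 'k"
    and mul :: "('b \<Rightarrow> 'k) \<Rightarrow> ('b \<Rightarrow> 'k) \<Rightarrow> ('b \<Rightarrow> 'k)"
    and one :: "'b \<Rightarrow> 'k"
    and Phi Phiinv :: "('b \<Rightarrow> 'k) \<Rightarrow> ('b \<Rightarrow> 'k) \<Rightarrow> ('b \<Rightarrow> 'k) \<Rightarrow> 'k"
    and S :: "('b \<Rightarrow> 'k) \<Rightarrow> ('b \<Rightarrow> 'k)"
    and alpha beta :: "('b \<Rightarrow> 'k) \<Rightarrow> 'k"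
    and Mg :: "nat \<Rightarrow> ('b \<Rightarrow> 'k) set"
    and G :: "('b \<Rightarrow> 'k) set"
  assumes alg_closed: "\<forall>p :: 'k poly. 0 < degree p \<longrightarrow> (\<exists>x. poly p x = 0)"
    and majid: "majid_algebra Del eps mul one Phi Phiinv S alpha beta"
    and pointed: "pointed Del"
    and graded: "graded_majid Del eps mul one Phi S alpha beta Mg"
    and G_def: "G = grouplikes Del eps"
    and generated: "gen_subalg mul one (G \<union> skewprims Del eps) = UNIV"
    and G_finite: "finite G"
    and G_group: "\<forall>g\<in>G. \<forall>h\<in>G. mul g h \<in> G"
    and G_inv: "\<forall>g\<in>G. \<exists>h\<in>G. mul g h = one \<and> mul h g = one"
    and G_abelian: "\<forall>g\<in>G. \<forall>h\<in>G. mul g h = mul h g"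
  shows "(\<forall>g\<in>G. \<forall>f\<in>G. \<forall>X\<in>Rg Del (gcomp Mg 0) one g.
             gact mul one Phi G g f X \<in> Rg Del (gcomp Mg 0) one g)
       \<and> (\<forall>g\<in>G. \<forall>e\<in>G. \<forall>f\<in>G. \<forall>X\<in>Rg Del (gcomp Mg 0) one g.
             gact mul one Phi G g e (gact mul one Phi G g f X)
               = smul (Phitilde Phi g e f) (gact mul one Phi G g (mul e f) X))
       \<and> (\<forall>g\<in>G. \<forall>X\<in>Rg Del (gcomp Mg 0) one g. gact mul one Phi G g one X = X)
       \<and> Rset Del (gcomp Mg 0) one = lspan (\<Union>g\<in>G. Rg Del (gcomp Mg 0) one g)
       \<and> (\<forall>c. (\<forall>g\<in>G. c g \<in> Rg Del (gcomp Mg 0) one g) \<and> (\<Sum>g\<in>G. c g) = 0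
              \<longrightarrow> (\<forall>g\<in>G. c g = 0))"
proof -
  interpret L: LM Del eps mul one Phi Phiinv S alpha beta Mg G
    by (rule LM.intro[OF majid graded G_def G_finite G_group G_inv G_abelian])
  show ?thesis
  proof (intro conjI)
    show "\<forall>g\<in>G. \<forall>f\<in>G. \<forall>X\<in>Rg Del (gcomp Mg 0) one g.
             gact mul one Phi G g f X \<in> Rg Del (gcomp Mg 0) one g"
      using L.act_in L.Rg_C by simp
    show "\<forall>g\<in>G. \<forall>e\<in>G. \<forall>f\<in>G. \<forall>X\<in>Rg Del (gcomp Mg 0) one g.
             gact mul one Phi G g e (gact mul one Phi G g f X)
               = smul (Phitilde Phi g e f) (gact mul one Phi G g (mul e f) X)"
      using L.act_comp L.Rg_C by simp
    show "\<forall>g\<in>G. \<forall>X\<in>Rg Del (gcomp Mg 0) one g. gact mul one Phi G g one X = X"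
      using L.act_one by simp
    show "Rset Del (gcomp Mg 0) one = lspan (\<Union>g\<in>G. Rg Del (gcomp Mg 0) one g)"
      by (rule L.conj4)
    show "\<forall>c. (\<forall>g\<in>G. c g \<in> Rg Del (gcomp Mg 0) one g) \<and> (\<Sum>g\<in>G. c g) = 0
              \<longrightarrow> (\<forall>g\<in>G. c g = 0)"
      by (simp add: L.Rg_C) (use L.conj5 in blast)
  qed
qed

end
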